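(* Let $U\subset\mathbb{C}^n$ (or a Stein open subset of a complex manifold with global coordinates $z^1,\dots,z^n$) and $A=\Gamma(U,\mathcal{O})$. Let $\mathcal{B}^{\cdot}(A)$ be the bar resolution of $A$ and $K^{\cdot}$ the Koszul complex on $U\times U$, and let $\Phi^{\cdot}:\mathcal{B}^{\cdot}\to K^{\cdot}$ be the map defined recursively below. Then $\Phi^{\cdot}$ is a chain map ($d_K\Phi^{-q}=\Phi^{-(q-1)}\partial$ for all $q\ge1$), $\Phi^0$ induces the identity on $\mathcal{O}_{\Delta\cap (U\times U)}$, and $\Phi^{\cdot}$ is a quasi-isomorphism.
   Context: On $U\times U$ use coordinates $(z,\zeta)=(z^1,\dots,z^n,\zeta^1,\dots,\zeta^n)$, $z=p_1^*z$, $\zeta=p_2^*z$; $\Delta$ is the diagonal. Bar complex: $\mathcal{B}^{-q}(A)=A^{\otimes(q+2)}$ (tensor over $\mathbb{C}$), an $A^e=A\otimes A$-module via the first and last factors, with $A^e$-linear differential $\partial(f_0\otimes\cdots\otimes f_{q+1})=\sum_{i=0}^{q}(-1)^i f_0\otimes\cdots\otimes f_if_{i+1}\otimes\cdots\otimes f_{q+1}$; it resolves $A$. Koszul complex: $F=\bigoplus_{i=1}^n\mathcal{O}_{U\times U}e^i$, $\check e^i$ the dual basis, $K^{-q}=\Lambda^qF$ ($0\le q\le n$), with $d_K:K^{-q}\to K^{-q+1}$ the contraction with $\sum_i(z^i-\zeta^i)\check e^i$. Homotopy $P:K^{-q}\to K^{-q-1}$: for an increasing multi-index $I$ of length $|I|$,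 $P(fe^I)=\sum_{j=1}^n\Big(\int_0^1t^{|I|}\frac{\partial f}{\partial z^j}(\zeta+t(z-\zeta),\zeta)\,dt\Big)e^j\wedge e^I$. The map $\Phi^{\cdot}$ is $A^e$-linear (identifying $A^e$ with functions $f(z)g(\zeta)$), defined by $\Phi^0(f_0\otimes f_1)=f_0(z)f_1(\zeta)$ and, for $1\le q\le n$, $\Phi^{-q}(f_0\otimes\cdots\otimes f_{q+1})=f_0(z)\,\big\{P\,\Phi^{-(q-1)}\big(\partial(1\otimes f_1\otimes\cdots\otimes f_q\otimes1)\big)\big\}\,f_{q+1}(\zeta)$, and $\Phi^{-q}=0$ for $q>n$. *)

theory Defs
  imports "HOL-Analysis.Analysis"
begin

(* elements of A^{\<otimes>k}, modelled as functions on lists of k points of U *)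
type_synonym 'n tens = "(complex^'n) list \<Rightarrow> complex"
(* elements of \<Lambda>F with coefficients O(U\<times>U): coefficient of e^I, I a set of indices *)
type_synonym 'n kos = "'n set \<Rightarrow> (complex^'n) \<Rightarrow> (complex^'n) \<Rightarrow> complex"

definition holo :: "(complex^'n::finite) set \<Rightarrow> ((complex^'n) \<Rightarrow> complex) \<Rightarrow> bool" where
  "holo U f \<longleftrightarrow> (\<forall>x\<in>U. \<exists>L. (f has_derivative L) (at x) \<and>
       (\<forall>c v. L (c *s v) = c * L v))"

definition holo2 :: "(complex^'n::finite) set \<Rightarrow> ((complex^'n) \<Rightarrow> (complex^'n) \<Rightarrow> complex) \<Rightarrow> bool" where
  "holo2 U f \<longleftrightarrow> (\<forall>x\<in>U \<times> U. \<exists>L. ((\<lambda>p. f (fst p) (snd p)) has_derivative L) (at x) \<and>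
       (\<forall>c v w. L (c *s v, c *s w) = c * L (v, w)))"

text \<open>Bar complex: B^{-q}(A) = A^{\<otimes>(q+2)}, realised as the finite sums of products
  f_0(x_0)...f_{q+1}(x_{q+1}) of holomorphic functions on U^{q+2}, extended by 0 elsewhere.\<close>
definition BarSpace :: "(complex^'n::finite) set \<Rightarrow> nat \<Rightarrow> 'n tens set" where
  "BarSpace U q = {F. \<exists>(N::nat) fs. (\<forall>m<N. \<forall>i<q+2. holo U (fs m i)) \<and>
      (\<forall>xs. F xs = (if length xs = q + 2 \<and> set xs \<subseteq> U
                     then (\<Sum>m<N. \<Prod>i<q+2. fs m i (xs ! i)) else 0))}"

text \<open>Bar differential B^{-q} \<rightarrow> B^{-(q-1)}:
  f_0\<otimes>...\<otimes>f_{q+1} \<mapsto> \<Sum>_{i=0}^{q} (-1)^i f_0\<otimes>...\<otimes>f_i f_{i+1}\<otimes>...\<otimes>f_{q+1}.\<close>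
definition barD :: "(complex^'n::finite) set \<Rightarrow> nat \<Rightarrow> 'n tens \<Rightarrow> 'n tens" where
  "barD U q F = (\<lambda>xs. if length xs = q + 1 \<and> set xs \<subseteq> U
      then (\<Sum>i\<le>q. (-1) ^ i * F (take (Suc i) xs @ drop i xs)) else 0)"

definition Kos :: "(complex^'n::finite) set \<Rightarrow> nat \<Rightarrow> 'n kos set" where
  "Kos U q = {\<omega>. (\<forall>I. card I \<noteq> q \<longrightarrow> \<omega> I = (\<lambda>z \<zeta>. 0)) \<and>
      (\<forall>I z \<zeta>. (z \<notin> U \<or> \<zeta> \<notin> U) \<longrightarrow> \<omega> I z \<zeta> = 0) \<and> (\<forall>I. holo2 U (\<omega> I))}"

text \<open>sign of e^i \<and> e^I (I increasing, i \<notin> I) relative to e^{I \<union> {i}}\<close>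
definition sgnK :: "'n::linorder \<Rightarrow> 'n set \<Rightarrow> complex" where
  "sgnK i I = (-1) ^ card {l\<in>I. l < i}"

text \<open>d_K = contraction with \<Sum>_i (z^i - \<zeta>^i) e^i-dual.\<close>
definition dK :: "(complex^'n::{finite,linorder}) set \<Rightarrow> 'n kos \<Rightarrow> 'n kos" where
  "dK U \<omega> = (\<lambda>I z \<zeta>. if z \<in> U \<and> \<zeta> \<in> U then
      (\<Sum>i\<in>UNIV - I. sgnK i I * (z $ i - \<zeta> $ i) * \<omega> (insert i I) z \<zeta>) else 0)"

definition upd :: "(complex^'n::finite) \<Rightarrow> 'n \<Rightarrow> complex \<Rightarrow> (complex^'n)" where
  "upd x j w = (\<chi> k. if k = j then w else x $ k)"

definition pz :: "'n::finite \<Rightarrow> ((complex^'n) \<Rightarrow> (complex^'n) \<Rightarrow> complex) \<Rightarrow> (complex^'n) \<Rightarrow> (complex^'n) \<Rightarrow> complex" where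
  "pz j g x \<zeta> = deriv (\<lambda>w. g (upd x j w) \<zeta>) (x $ j)"

text \<open>Homotopy P: P(f e^I) = \<Sum>_j (\<integral>_0^1 t^{|I|} \<partial>f/\<partial>z^j(\<zeta>+t(z-\<zeta>),\<zeta>) dt) e^j \<and> e^I.\<close>
definition Pop :: "(complex^'n::{finite,linorder}) set \<Rightarrow> 'n kos \<Rightarrow> 'n kos" where
  "Pop U \<omega> = (\<lambda>J z \<zeta>. if z \<in> U \<and> \<zeta> \<in> U then
      (\<Sum>j\<in>J. sgnK j (J - {j}) *
         integral {0..1::real} (\<lambda>t. complex_of_real (t ^ (card J - 1)) *
             pz j (\<omega> (J - {j})) (\<zeta> + t *\<^sub>R (z - \<zeta>)) \<zeta>)) else 0)"

text \<open>For q \<ge> 1, \<Phi>^{-q}(F)(z,\<zeta>) is P\<Phi>^{-(q-1)}\<partial> applied to the slice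
  x \<mapsto> F(a, x_1..x_q, b) (i.e. 1\<otimes>f_1\<otimes>..\<otimes>f_q\<otimes>1 weighted by f_0(a) f_{q+1}(b)), evaluated
  at a = z, b = \<zeta>; this is the A^e-linear extension of the recursive formula.\<close>
primrec Phi :: "(complex^'n::{finite,linorder}) set \<Rightarrow> nat \<Rightarrow> 'n tens \<Rightarrow> 'n kos" where
  "Phi U 0 F = (\<lambda>I z \<zeta>. if I = {} \<and> z \<in> U \<and> \<zeta> \<in> U then F [z, \<zeta>] else 0)"
| "Phi U (Suc q) F = (\<lambda>I z \<zeta>. if Suc q \<le> CARD('n) \<and> z \<in> U \<and> \<zeta> \<in> U then
      Pop U (Phi U q (barD U (Suc q) (\<lambda>xs. F (z # take (Suc q) (tl xs) @ [\<zeta>])))) I z \<zeta>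
    else 0)"

end

theory Submission
  imports Defs "HOL-Complex_Analysis.Cauchy_Integral_Formula"
begin

definition cm :: "complex \<Rightarrow> (complex^'n::finite) \<times> (complex^'n) \<Rightarrow> (complex^'n) \<times> (complex^'n)" where
  "cm c p = (c *s fst p, c *s snd p)"

definition cdiffat :: "((complex^'n::finite) \<times> (complex^'n) \<Rightarrow> complex) \<Rightarrow> _ \<Rightarrow> bool" where
  "cdiffat g p \<longleftrightarrow> (\<exists>L. (g has_derivative L) (at p) \<and> (\<forall>c u. L (cm c u) = c * L u))"

definition holoP :: "((complex^'n::finite) \<times> (complex^'n)) set \<Rightarrow> (_ \<Rightarrow> complex) \<Rightarrow> bool" where
  "holoP S g \<longleftrightarrow> (\<forall>p\<in>S. cdiffat g p)"

lemma norm_smult_vec: "norm (c *s (v::complex^'n::finite)) = norm c * norm v"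
  unfolding norm_vec_def by (simp add: L2_set_right_distrib norm_mult)

lemma norm_cm: "norm (cm c p) = norm c * norm p"
  by (simp add: cm_def norm_prod_def norm_smult_vec power_mult_distrib
      distrib_left[symmetric] real_sqrt_mult)

lemma cm_add_left: "cm (a + b) p = cm a p + cm b p"
  by (simp add: cm_def vector_sadd_rdistrib)
lemma cm_scaleR_left: "cm (r *\<^sub>R a) p = r *\<^sub>R cm a p"
  by (simp add: cm_def vec_eq_iff prod_eq_iff; simp add: scaleR_conv_of_real)
lemma cm_zero_left[simp]: "cm 0 p = 0"
  by (simp add: cm_def zero_prod_def)
lemma cm_one[simp]: "cm 1 p = p"
  by (simp add: cm_def)
lemma cm_add_right: "cm c (p + q) = cm c p + cm c q"
  by (simp add: cm_def vector_add_ldistrib)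
lemma cm_scaleR_right: "cm c (r *\<^sub>R p) = r *\<^sub>R cm c p"
  by (simp add: cm_def vec_eq_iff prod_eq_iff; simp add: scaleR_conv_of_real)
lemma cm_of_real: "cm (of_real r) p = r *\<^sub>R p"
  by (simp add: cm_def vec_eq_iff prod_eq_iff; simp add: scaleR_conv_of_real)

lemma bounded_linear_cm_left: "bounded_linear (\<lambda>h. cm h e)"
  apply (rule bounded_linear_intro[where K="norm e"])
  by (auto simp: cm_add_left cm_scaleR_left norm_cm)

abbreviation Dg where "Dg g p \<equiv> frechet_derivative g (at p)"

lemma holoP_D:
  assumes "holoP S g" "p \<in> S"
  shows "(g has_derivative Dg g p) (at p)" "\<And>c u. Dg g p (cm c u) = c * Dg g p u"
    "bounded_linear (Dg g p)"
proof -
  obtain L where L: "(g has_derivative L) (at p)" "\<And>c u. L (cm c u) = c * L u"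
    using assms unfolding holoP_def cdiffat_def by blast
  have "L = Dg g p" using L(1) frechet_derivative_at by blast
  then show "(g has_derivative Dg g p) (at p)" "\<And>c u. Dg g p (cm c u) = c * Dg g p u"
    "bounded_linear (Dg g p)" using L has_derivative_bounded_linear by blast+
qed

lemma disc_deriv:
  assumes "holoP S g" "x + cm w0 e \<in> S"
  shows "((\<lambda>w. g (x + cm w e)) has_field_derivative Dg g (x + cm w0 e) e) (at w0)"
proof -
  have d1: "((\<lambda>w. x + cm w e) has_derivative (\<lambda>h. cm h e)) (at w0)"
    using has_derivative_add[OF has_derivative_const bounded_linear_imp_has_derivative[OF bounded_linear_cm_left]]
    by simp
  have "((g \<circ> (\<lambda>w. x + cm w e)) has_derivative (Dg g (x + cm w0 e) \<circ> (\<lambda>h. cm h e))) (at w0)"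
    by (rule diff_chain_at[OF d1]) (use holoP_D[OF assms] in simp)
  moreover have "(Dg g (x + cm w0 e) \<circ> (\<lambda>h. cm h e)) = (*) (Dg g (x + cm w0 e) e)"
    using holoP_D(2)[OF assms] by (auto simp: fun_eq_iff mult.commute)
  ultimately show ?thesis unfolding has_field_derivative_def o_def by simp
qed

lemma holoP_cont_D:
  assumes S: "open S" and hg: "holoP S g"
  shows "continuous_on S (\<lambda>p. Blinfun (Dg g p))"
  unfolding continuous_on_eq_continuous_at[OF S]
proof (intro ballI)
  fix p assume pS: "p \<in> S"
  show "continuous (at p) (\<lambda>p. Blinfun (Dg g p))"
    unfolding continuous_at_eps_delta
  proof (intro allI impI)
    fix \<epsilon> :: real assume ep: "\<epsilon> > 0"
    obtain r0 where r0: "r0 > 0" "cball p r0 \<subseteq> S" using S pS open_contains_cball by blast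
    define r where "r = r0 / 2"
    have r: "r > 0" "cball p (2*r) \<subseteq> S" using r0 by (auto simp: r_def)
    have contg: "continuous_on (cball p (2*r)) g"
      by (rule continuous_at_imp_continuous_on)
         (use r holoP_D(1)[OF hg] has_derivative_continuous in blast)
    have "uniformly_continuous_on (cball p (2*r)) g"
      by (rule compact_uniformly_continuous[OF contg compact_cball])
    then obtain \<delta> where \<delta>: "\<delta> > 0" and
      ucont: "\<And>x x'. x \<in> cball p (2*r) \<Longrightarrow> x' \<in> cball p (2*r) \<Longrightarrow> dist x' x < \<delta> \<Longrightarrow>
          dist (g x') (g x) < \<epsilon> * r / 2"
      unfolding uniformly_continuous_on_def using ep r by (metis half_gt_zero mult_pos_pos)
    show "\<exists>d>0. \<forall>y. dist y p < d \<longrightarrow> dist (Blinfun (Dg g y)) (Blinfun (Dg g p)) < \<epsilon>"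
    proof (intro exI[of _ "min \<delta> r"] conjI allI impI)
      show "min \<delta> r > 0" using \<delta> r by simp
      fix y assume y: "dist y p < min \<delta> r"
      have yS: "y \<in> S" using y r by (auto simp: dist_commute)
      have key: "norm (Dg g y v - Dg g p v) \<le> \<epsilon> / 2" if v: "norm v = 1" for v
      proof -
        define \<psi> where "\<psi> w = g (y + cm w v) - g (p + cm w v)" for w
        have inS: "y + cm w v \<in> cball p (2*r)" "p + cm w v \<in> cball p (2*r)"
          if "norm w \<le> r" for w
        proof -
          have "dist p (y + cm w v) \<le> dist p y + norm (cm w v)"
          proof -
            have "dist p (y + cm w v) = norm ((p - y) - cm w v)" by (simp add: dist_norm algebra_simps)
            also have "\<dots> \<le> norm (p - y) + norm (cm w v)" by (rule norm_triangle_ineq4)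
            finally show ?thesis by (simp add: dist_norm)
          qed
          then show "y + cm w v \<in> cball p (2*r)" using y that v
            by (auto simp: norm_cm dist_commute)
          show "p + cm w v \<in> cball p (2*r)" using that v r
            by (auto simp: norm_cm dist_norm)
        qed
        have der: "(\<psi> has_field_derivative (Dg g (y + cm w v) v - Dg g (p + cm w v) v)) (at w)"
          if "norm w \<le> r" for w
          unfolding \<psi>_def
          by (intro DERIV_diff disc_deriv[OF hg]) (use inS[OF that] r in auto)
        have hol: "\<psi> holomorphic_on ball 0 r"
          unfolding holomorphic_on_def
          using der field_differentiable_at_within field_differentiable_def
          by (metis dist_0_norm less_le mem_ball)
        have cont: "continuous_on (cball 0 r) \<psi>"
          by (rule continuous_at_imp_continuous_on)
             (metis der DERIV_isCont dist_0_norm mem_cball)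
        have bd: "norm (\<psi> w) \<le> \<epsilon> * r / 2" if "norm (0 - w) = r" for w
        proof -
          have "dist (g (y + cm w v)) (g (p + cm w v)) < \<epsilon> * r / 2"
            by (rule ucont) (use inS that y in \<open>auto simp: dist_norm\<close>)
          then show ?thesis by (simp add: \<psi>_def dist_norm)
        qed
        have "norm ((deriv ^^ 1) \<psi> 0) \<le> fact 1 * (\<epsilon> * r / 2) / r ^ 1"
          by (rule Cauchy_inequality[OF hol cont r(1) bd])
        moreover have "deriv \<psi> 0 = Dg g y v - Dg g p v"
          using DERIV_imp_deriv[OF der[of 0]] r by simp
        ultimately show ?thesis using r by simp
      qed
      have bly: "bounded_linear (Dg g y)" and blp: "bounded_linear (Dg g p)"
        using holoP_D(3)[OF hg] yS pS by auto
      have "norm (Blinfun (Dg g y) - Blinfun (Dg g p)) \<le> \<epsilon> / 2"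
      proof (rule norm_blinfun_bound)
        show "0 \<le> \<epsilon> / 2" using ep by simp
        fix u
        show "norm (blinfun_apply (Blinfun (Dg g y) - Blinfun (Dg g p)) u) \<le> \<epsilon> / 2 * norm u"
        proof (cases "u = 0")
          case True then show ?thesis
            using bly blp by (simp add: blinfun.diff_left bounded_linear_Blinfun_apply linear_simps)
        next
          case False
          define v where "v = (1 / norm u) *\<^sub>R u"
          have v1: "norm v = 1" using False by (simp add: v_def)
          have uv: "u = norm u *\<^sub>R v" using False by (simp add: v_def)
          have "blinfun_apply (Blinfun (Dg g y) - Blinfun (Dg g p)) u = norm u *\<^sub>R (Dg g y v - Dg g p v)"
            using bly blp
            by (subst uv, simp add: blinfun.diff_left bounded_linear_Blinfun_apply
               linear_cmul[OF bounded_linear.linear[OF bly]] linear_cmul[OF bounded_linear.linear[OF blp]] scaleR_diff_right)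
          moreover have "norm u * cmod (Dg g y v - Dg g p v) \<le> norm u * (\<epsilon> / 2)"
            using key[OF v1] by (intro mult_left_mono) auto
          ultimately show ?thesis by (simp add: mult.commute)
        qed
      qed
      then show "dist (Blinfun (Dg g y)) (Blinfun (Dg g p)) < \<epsilon>"
        using ep by (simp add: dist_norm)
    qed
  qed
qed

definition cc :: "real \<Rightarrow> real \<Rightarrow> complex" where
  "cc R t = of_real R * exp (2 * of_real pi * \<i> * of_real t)"

lemma norm_cc: "R \<ge> 0 \<Longrightarrow> norm (cc R t) = R"
  by (simp add: cc_def norm_mult norm_exp_eq_Re)

lemma cc_nz: "R > 0 \<Longrightarrow> cc R t \<noteq> 0"
  using norm_cc[of R t] by auto

lemma cont_cc: "continuous_on A (cc R)"
  unfolding cc_def by (intro continuous_intros)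

lemma circle_rep:
  assumes hg: "holoP S g" and R: "R > 0"
    and inS: "\<And>w. norm w \<le> R \<Longrightarrow> x + cm w e \<in> S"
  shows "((\<lambda>t. g (x + cm (cc R t) e) * inverse (cc R t)) has_integral Dg g x e) {0..1}"
proof -
  define \<phi> where "\<phi> w = g (x + cm w e)" for w
  have der: "(\<phi> has_field_derivative Dg g (x + cm w e) e) (at w)" if "norm w \<le> R" for w
    unfolding \<phi>_def by (rule disc_deriv[OF hg inS[OF that]])
  have hol: "\<phi> holomorphic_on ball 0 R"
    unfolding holomorphic_on_def
    using der field_differentiable_at_within field_differentiable_def
    by (metis dist_0_norm less_le mem_ball)
  have cont: "continuous_on (cball 0 R) \<phi>"
    by (rule continuous_at_imp_continuous_on)
       (metis der DERIV_isCont dist_0_norm mem_cball)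
  have ci: "((\<lambda>u. \<phi> u / (u - 0) ^ Suc 1) has_contour_integral ((2 * pi * \<i>) / (fact 1) * (deriv ^^ 1) \<phi> 0))
           (circlepath 0 R)"
    by (rule Cauchy_has_contour_integral_higher_derivative_circlepath[OF cont hol]) (use R in simp)
  have d0: "deriv \<phi> 0 = Dg g x e"
    using DERIV_imp_deriv[OF der[of 0]] R by simp
  have "((\<lambda>t. \<phi> (cc R t) / (cc R t) ^ 2 * vector_derivative (circlepath 0 R) (at t within {0..1}))
        has_integral (2 * pi * \<i> * Dg g x e)) {0..1}"
  proof -
    have cp: "circlepath 0 R t = cc R t" for t by (simp add: circlepath cc_def)
    show ?thesis using ci d0 unfolding has_contour_integral_def
      by (simp only: cp) (simp add: power2_eq_square)
  qed
  then have "((\<lambda>t. (2 * pi * \<i>) * (\<phi> (cc R t) * inverse (cc R t))) has_integral (2 * pi * \<i> * Dg g x e)) {0..1}"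
    apply (rule has_integral_spike_finite[where S="{}", rotated 2])
    using cc_nz[OF R] by (auto simp: vector_derivative_circlepath01 cc_def power2_eq_square field_simps)
  then have "((\<lambda>t. \<phi> (cc R t) * inverse (cc R t)) has_integral (2 * pi * \<i> * Dg g x e) / (2 * pi * \<i>)) {0..1}"
    by (subst (asm) has_integral_mult_right_iff) auto
  then show ?thesis by (simp add: \<phi>_def)
qed

lemma holoP_transform:
  assumes "holoP S g" "open S" "\<And>x. x \<in> S \<Longrightarrow> g x = h x"
  shows "holoP S h"
  using assms unfolding holoP_def cdiffat_def
  by (meson has_derivative_transform_within_open)

lemma holoP_Dg_dir:
  assumes S: "open S" and hg: "holoP S g"
  shows "holoP S (\<lambda>p. Dg g p e)"
  unfolding holoP_def cdiffat_def
proof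
  fix p assume pS: "p \<in> S"
  obtain \<rho> where \<rho>: "\<rho> > 0" "cball p \<rho> \<subseteq> S" using S pS open_contains_cball by blast
  define R where "R = \<rho> / (2 * (norm e + 1))"
  have R: "R > 0" unfolding R_def using \<rho>(1) by (intro divide_pos_pos) (auto intro: add_nonneg_pos)
  define V where "V = ball p (\<rho>/2)"
  have V: "open V" "convex V" "p \<in> V" using \<rho> by (auto simp: V_def)
  have inS: "x + cm w e \<in> S" if x: "x \<in> V" and w: "norm w \<le> R" for x w
  proof -
    have q1: "norm e / (norm e + 1) \<le> 1" by (simp add: divide_le_eq_1 add_nonneg_pos)
    have "R * norm e = \<rho> / 2 * (norm e / (norm e + 1))" by (simp add: R_def field_simps)
    also have "\<dots> \<le> \<rho> / 2 * 1" using q1 \<rho>(1) by (intro mult_left_mono) auto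
    finally have "R * norm e \<le> \<rho> / 2" by simp
    then have ncm: "norm (cm w e) \<le> \<rho> / 2"
    proof -
      have "norm w * norm e \<le> R * norm e" using w by (intro mult_right_mono) auto
      then show ?thesis using \<open>R * norm e \<le> \<rho> / 2\<close> by (simp add: norm_cm)
    qed
    have "dist p (x + cm w e) = norm ((p - x) - cm w e)" by (simp add: dist_norm algebra_simps)
    also have "\<dots> \<le> norm (p - x) + norm (cm w e)" by (rule norm_triangle_ineq4)
    finally have "dist p (x + cm w e) \<le> \<rho>" using x ncm by (simp add: V_def dist_norm)
    then show ?thesis using \<rho> by auto
  qed
  define f where "f x t = g (x + cm (cc R t) e) * inverse (cc R t)" for x t
  have rep: "((f x) has_integral Dg g x e) (cbox 0 1)" if "x \<in> V" for x
    unfolding f_def interval_cbox[symmetric]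
    by (rule circle_rep[OF hg R]) (use inS that in auto)
  define fx where "fx x t = blinfun_mult_left (inverse (cc R t)) o\<^sub>L Blinfun (Dg g (x + cm (cc R t) e))" for x t
  have nc: "norm (cc R t) = R" for t using R norm_cc by simp
  have fxa: "blinfun_apply (fx x t) = (\<lambda>h. Dg g (x + cm (cc R t) e) h * inverse (cc R t))" if "x \<in> V" for x t
    using holoP_D(3)[OF hg inS[OF that]] nc
    by (simp add: fx_def fun_eq_iff bounded_linear_Blinfun_apply)
  have der: "((\<lambda>x. f x t) has_derivative blinfun_apply (fx x t)) (at x within V)"
    if "x \<in> V" "t \<in> cbox 0 1" for x t
  proof -
    have d1: "((\<lambda>x. x + cm (cc R t) e) has_derivative (\<lambda>h. h)) (at x)"
      by (intro derivative_eq_intros) auto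
    have "((g \<circ> (\<lambda>x. x + cm (cc R t) e)) has_derivative (Dg g (x + cm (cc R t) e) \<circ> (\<lambda>h. h))) (at x)"
      by (rule diff_chain_at[OF d1]) (use holoP_D(1)[OF hg inS[OF \<open>x \<in> V\<close>]] nc in simp)
    then have "((\<lambda>x. g (x + cm (cc R t) e) * inverse (cc R t)) has_derivative
         (\<lambda>h. Dg g (x + cm (cc R t) e) h * inverse (cc R t))) (at x)"
      unfolding o_def by (rule has_derivative_mult_left)
    then show ?thesis unfolding fxa[OF that(1)] f_def by (rule has_derivative_at_withinI)
  qed
  have contD: "continuous_on (V \<times> cbox 0 1) (\<lambda>(x, t). Blinfun (Dg g (x + cm (cc R t) e)))"
  proof -
    have c1: "continuous_on (V \<times> cbox 0 1) (\<lambda>(x, t). x + cm (cc R t) e)"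
      unfolding case_prod_beta
      by (intro continuous_intros continuous_on_compose2[OF linear_continuous_on[OF bounded_linear_cm_left]]
          continuous_on_compose2[OF cont_cc[of UNIV R]]) auto
    have "(\<lambda>(x, t). x + cm (cc R t) e) ` (V \<times> cbox 0 1) \<subseteq> S"
      using inS nc by (auto simp: less_imp_le)
    then show ?thesis
      using continuous_on_compose2[OF holoP_cont_D[OF S hg] c1] by (simp add: case_prod_beta)
  qed
  have contM: "continuous_on (V \<times> cbox 0 1) (\<lambda>(x, t). blinfun_mult_left (inverse (cc R t)))"
    unfolding case_prod_beta
    by (intro continuous_on_compose2[OF linear_continuous_on[OF bounded_linear_blinfun_mult_left]]
        continuous_intros continuous_on_compose2[OF cont_cc[of UNIV R]])
       (auto simp: cc_nz[OF R])
  have cont: "continuous_on (V \<times> cbox 0 1) (\<lambda>(x, t). fx x t)"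
    using bounded_bilinear.continuous_on[OF bounded_bilinear_blinfun_compose contM contD] by (simp add: fx_def case_prod_beta)
  have L: "((\<lambda>x. integral (cbox 0 1) (f x)) has_derivative blinfun_apply (integral (cbox 0 1) (fx p))) (at p within V)"
    by (rule leibniz_rule[OF der _ cont V(3) V(2)]) (use rep in auto)
  then have L2: "((\<lambda>x. Dg g x e) has_derivative blinfun_apply (integral (cbox 0 1) (fx p))) (at p)"
    unfolding at_within_open[OF V(3) V(1)]
    by (rule has_derivative_transform_within_open[OF _ V(1) V(3)]) (use rep integral_unique in auto)
  have cfp: "continuous_on (cbox 0 1) (fx p)"
  proof -
    have "continuous_on (cbox 0 1) (\<lambda>t. (p, t::real))" by (intro continuous_intros)
    moreover have "(\<lambda>t. (p, t::real)) ` cbox 0 1 \<subseteq> V \<times> cbox 0 1" using V(3) by auto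
    ultimately have "continuous_on (cbox 0 1) (\<lambda>x. case (p, x) of (x, t) \<Rightarrow> fx x t)"
      by (rule continuous_on_compose2[OF cont])
    then show ?thesis by simp
  qed
  have "blinfun_apply (integral (cbox 0 1) (fx p)) (cm c u) = c * blinfun_apply (integral (cbox 0 1) (fx p)) u" for c u
  proof -
    have ii: "\<And>v. blinfun_apply (integral (cbox 0 1) (fx p)) v =
        integral (cbox 0 1) (\<lambda>t. Dg g (p + cm (cc R t) e) v * inverse (cc R t))"
      using blinfun_apply_integral[OF integrable_continuous[OF cfp]] fxa[OF V(3)] by simp
    show ?thesis unfolding ii
      using holoP_D(2)[OF hg inS[OF V(3)]] nc by (simp add: mult.assoc)
  qed
  with L2 show "\<exists>L. ((\<lambda>p. Dg g p e) has_derivative L) (at p) \<and> (\<forall>c u. L (cm c u) = c * L u)"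
    by blast
qed

definition Gt :: "real \<Rightarrow> ((complex^'n::finite) \<times> (complex^'n)) \<Rightarrow>\<^sub>L ((complex^'n) \<times> (complex^'n))" where
  "Gt t = Blinfun (\<lambda>v. (snd v + t *\<^sub>R (fst v - snd v), snd v))"

lemma bl_Gt: "bounded_linear (\<lambda>v::(complex^'n::finite) \<times> (complex^'n). (snd v + t *\<^sub>R (fst v - snd v), snd v))"
  by (intro bounded_linear_Pair bounded_linear_add bounded_linear_snd
      bounded_linear_compose[OF bounded_linear_scaleR_right] bounded_linear_sub bounded_linear_fst)

lemma Gt_apply: "blinfun_apply (Gt t) v = (snd v + t *\<^sub>R (fst v - snd v), snd v)"
  by (simp add: Gt_def bounded_linear_Blinfun_apply[OF bl_Gt])

lemma Gt_cm: "blinfun_apply (Gt t) (cm c v) = cm c (blinfun_apply (Gt t) v)"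
  by (simp add: Gt_apply cm_def vector_add_ldistrib vector_ssub_ldistrib vec_eq_iff algebra_simps)

lemma cont_Gt: "continuous_on A (\<lambda>t. Gt t :: ((complex^'n::finite) \<times> (complex^'n)) \<Rightarrow>\<^sub>L _)"
proof -
  define A0 :: "((complex^'n::finite) \<times> (complex^'n)) \<Rightarrow>\<^sub>L ((complex^'n) \<times> (complex^'n))"
    where "A0 = Blinfun (\<lambda>v. (snd v, snd v))"
  define B0 :: "((complex^'n::finite) \<times> (complex^'n)) \<Rightarrow>\<^sub>L ((complex^'n) \<times> (complex^'n))"
    where "B0 = Blinfun (\<lambda>v. (fst v - snd v, 0))"
  have blA: "bounded_linear (\<lambda>v::(complex^'n::finite) \<times> (complex^'n). (snd v, snd v))"
    by (intro bounded_linear_Pair bounded_linear_snd)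
  have blB: "bounded_linear (\<lambda>v::(complex^'n::finite) \<times> (complex^'n). (fst v - snd v, 0::complex^'n))"
    by (intro bounded_linear_Pair bounded_linear_sub bounded_linear_fst bounded_linear_snd bounded_linear_zero)
  have "Gt t = A0 + t *\<^sub>R B0" for t
    by (rule blinfun_eqI) (simp add: Gt_apply A0_def B0_def bounded_linear_Blinfun_apply[OF blA]
        bounded_linear_Blinfun_apply[OF blB] plus_blinfun.rep_eq scaleR_blinfun.rep_eq)
  then have e: "Gt = (\<lambda>t. A0 + t *\<^sub>R B0)" by auto
  show ?thesis unfolding e by (intro continuous_intros)
qed

lemma holoP_cont:
  assumes "holoP S g" shows "continuous_on S g"
  by (rule continuous_at_imp_continuous_on)
     (use holoP_D(1)[OF assms] has_derivative_continuous in blast)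

lemma holoP_segint:
  assumes U: "open U" "convex U" and hh: "holoP (U \<times> U) h"
  shows "holoP (U \<times> U) (\<lambda>p. integral {0..1} (\<lambda>t. of_real (t^k) * h (snd p + t *\<^sub>R (fst p - snd p), snd p)))"
  unfolding holoP_def cdiffat_def
proof
  fix p assume pV: "p \<in> U \<times> U"
  define V where "V = U \<times> U"
  have V: "open V" "convex V" "p \<in> V" using U pV by (auto simp: V_def open_Times convex_Times)
  have inV: "blinfun_apply (Gt t) x \<in> V" if "x \<in> V" "t \<in> cbox 0 1" for x t
  proof -
    have "(1 - t) *\<^sub>R snd x + t *\<^sub>R fst x \<in> U"
      using that U(2) unfolding convex_def V_def by (auto simp: mem_Times_iff)
    moreover have "(1 - t) *\<^sub>R snd x + t *\<^sub>R fst x = snd x + t *\<^sub>R (fst x - snd x)"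
      by (simp add: algebra_simps)
    ultimately show ?thesis using that by (auto simp: Gt_apply V_def mem_Times_iff)
  qed
  define f where "f x t = of_real (t^k) * h (blinfun_apply (Gt t) x)" for x t
  define fx where "fx x t = (t^k) *\<^sub>R (Blinfun (Dg h (blinfun_apply (Gt t) x)) o\<^sub>L Gt t)" for x t
  have fxa: "blinfun_apply (fx x t) = (\<lambda>v. of_real (t^k) * Dg h (blinfun_apply (Gt t) x) (blinfun_apply (Gt t) v))"
    if "x \<in> V" "t \<in> cbox 0 1" for x t
    using holoP_D(3)[OF hh inV[OF that, unfolded V_def]]
    by (simp add: fx_def fun_eq_iff bounded_linear_Blinfun_apply scaleR_conv_of_real
        scaleR_blinfun.rep_eq)
  have der: "((\<lambda>x. f x t) has_derivative blinfun_apply (fx x t)) (at x within V)"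
    if "x \<in> V" "t \<in> cbox 0 1" for x t
  proof -
    have d1: "(blinfun_apply (Gt t) has_derivative blinfun_apply (Gt t)) (at x)"
      by (rule bounded_linear_imp_has_derivative) (rule blinfun.bounded_linear_right)
    have "((h \<circ> blinfun_apply (Gt t)) has_derivative (Dg h (blinfun_apply (Gt t) x) \<circ> blinfun_apply (Gt t))) (at x)"
      by (rule diff_chain_at[OF d1]) (use holoP_D(1)[OF hh inV[OF that, unfolded V_def]] in simp)
    then have "((\<lambda>x. of_real (t^k) * h (blinfun_apply (Gt t) x)) has_derivative
         (\<lambda>v. of_real (t^k) * Dg h (blinfun_apply (Gt t) x) (blinfun_apply (Gt t) v))) (at x)"
      unfolding o_def by (rule has_derivative_mult_right)
    then show ?thesis unfolding fxa[OF that] f_def by (rule has_derivative_at_withinI)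
  qed
  have cg: "continuous_on (V \<times> cbox 0 1) (\<lambda>(x, t). blinfun_apply (Gt t) x)"
    unfolding case_prod_beta
    by (intro bounded_bilinear.continuous_on[OF bounded_bilinear_blinfun_apply] continuous_intros continuous_on_compose2[OF cont_Gt[of UNIV]]) auto
  have gV: "(\<lambda>(x, t). blinfun_apply (Gt t) x) ` (V \<times> cbox 0 1) \<subseteq> V" using inV by auto
  have contD: "continuous_on (V \<times> cbox 0 1) (\<lambda>(x, t). Blinfun (Dg h (blinfun_apply (Gt t) x)))"
    using continuous_on_compose2[OF holoP_cont_D[OF V(1) hh[folded V_def]] cg gV] by (simp add: case_prod_beta)
  have cont: "continuous_on (V \<times> cbox 0 1) (\<lambda>(x, t). fx x t)"
    unfolding fx_def case_prod_beta
    by (intro continuous_intros bounded_bilinear.continuous_on[OF bounded_bilinear_blinfun_compose]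
        contD[unfolded case_prod_beta] continuous_on_compose2[OF cont_Gt[of UNIV]]) auto
  have intf: "f x integrable_on cbox 0 1" if "x \<in> V" for x
  proof -
    have c1: "continuous_on (cbox 0 1) (\<lambda>t. blinfun_apply (Gt t) x)"
      by (intro bounded_bilinear.continuous_on[OF bounded_bilinear_blinfun_apply] continuous_intros cont_Gt)
    have "continuous_on (cbox 0 1) (\<lambda>t. h (blinfun_apply (Gt t) x))"
    proof (rule continuous_on_compose2[OF holoP_cont[OF hh[folded V_def]] c1])
      show "(\<lambda>t. blinfun_apply (Gt t) x) ` cbox 0 1 \<subseteq> V" using inV that by blast
    qed
    then show ?thesis unfolding f_def by (intro integrable_continuous continuous_intros)
  qed
  have L: "((\<lambda>x. integral (cbox 0 1) (f x)) has_derivative blinfun_apply (integral (cbox 0 1) (fx p))) (at p within V)"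
    by (rule leibniz_rule[OF der intf cont V(3) V(2)])
  then have L2: "((\<lambda>x. integral (cbox 0 1) (f x)) has_derivative blinfun_apply (integral (cbox 0 1) (fx p))) (at p)"
    unfolding at_within_open[OF V(3) V(1)] .
  have cfp: "continuous_on (cbox 0 1) (fx p)"
  proof -
    have "continuous_on (cbox 0 1) (\<lambda>t. (p, t::real))" by (intro continuous_intros)
    moreover have "(\<lambda>t. (p, t::real)) ` cbox 0 1 \<subseteq> V \<times> cbox 0 1" using V(3) by auto
    ultimately have "continuous_on (cbox 0 1) (\<lambda>x. case (p, x) of (x, t) \<Rightarrow> fx x t)"
      by (rule continuous_on_compose2[OF cont])
    then show ?thesis by simp
  qed
  have lin: "blinfun_apply (integral (cbox 0 1) (fx p)) (cm c u) = c * blinfun_apply (integral (cbox 0 1) (fx p)) u" for c u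
  proof -
    have ii: "\<And>v. blinfun_apply (integral (cbox 0 1) (fx p)) v =
        integral (cbox 0 1) (\<lambda>t. blinfun_apply (fx p t) v)"
      using blinfun_apply_integral[OF integrable_continuous[OF cfp]] by simp
    have "integral (cbox 0 1) (\<lambda>t. blinfun_apply (fx p t) (cm c u)) =
          integral (cbox 0 1) (\<lambda>t. c * blinfun_apply (fx p t) u)"
    proof (rule integral_cong)
      fix t :: real assume t: "t \<in> cbox 0 1"
      show "blinfun_apply (fx p t) (cm c u) = c * blinfun_apply (fx p t) u"
        using holoP_D(2)[OF hh inV[OF V(3) t, unfolded V_def]]
        by (simp add: fxa[OF V(3) t] Gt_cm)
    qed
    then show ?thesis unfolding ii by simp
  qed
  have eqf: "(\<lambda>x. integral (cbox 0 1) (f x)) = (\<lambda>p. integral {0..1} (\<lambda>t. of_real (t^k) * h (snd p + t *\<^sub>R (fst p - snd p), snd p)))"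
    by (simp add: f_def[abs_def] Gt_apply)
  show "\<exists>L. ((\<lambda>p. integral {0..1} (\<lambda>t. of_real (t^k) * h (snd p + t *\<^sub>R (fst p - snd p), snd p)))
      has_derivative L) (at p) \<and> (\<forall>c u. L (cm c u) = c * L u)"
    unfolding eqf[symmetric] using L2 lin by blast
qed



definition unc :: "((complex^'n::finite) \<Rightarrow> (complex^'n) \<Rightarrow> complex) \<Rightarrow> (complex^'n) \<times> (complex^'n) \<Rightarrow> complex" where
  "unc g = (\<lambda>p. g (fst p) (snd p))"

lemma holo2_iff: "holo2 U f \<longleftrightarrow> holoP (U \<times> U) (unc f)"
  unfolding holo2_def holoP_def cdiffat_def unc_def cm_def
  by (simp add: split_paired_All)

lemma upd_eq: "upd x j w = x + (w - x$j) *s axis j 1"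
  by (simp add: upd_def vec_eq_iff axis_def)

lemma pz_deriv:
  fixes x z :: "complex^'n::finite"
  assumes hg: "holoP S (unc g)" and xS: "(x, z) \<in> S"
  shows "((\<lambda>w. g (upd x j w) z) has_field_derivative Dg (unc g) (x, z) (axis j 1, 0)) (at (x$j))"
    and "pz j g x z = Dg (unc g) (x, z) (axis j 1, 0)"
proof -
  define e :: "(complex^'n) \<times> (complex^'n)" where "e = (axis j 1, 0)"
  define x0 where "x0 = (x, z) - cm (x$j) e"
  have x0: "x0 + cm (x$j) e = (x, z)" by (simp add: x0_def)
  have eq: "(\<lambda>w. g (upd x j w) z) = (\<lambda>w. unc g (x0 + cm w e))"
    by (rule ext) (simp add: unc_def upd_eq x0_def e_def cm_def vec_eq_iff algebra_simps)
  have "((\<lambda>w. unc g (x0 + cm w e)) has_field_derivative Dg (unc g) (x0 + cm (x$j) e) e) (at (x$j))"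
    by (rule disc_deriv[OF hg]) (simp add: x0 xS)
  then have "((\<lambda>w. unc g (x0 + cm w e)) has_field_derivative Dg (unc g) (x, z) e) (at (x$j))"
    by (simp only: x0)
  then show d: "((\<lambda>w. g (upd x j w) z) has_field_derivative Dg (unc g) (x, z) (axis j 1, 0)) (at (x$j))"
    unfolding eq e_def .
  show "pz j g x z = Dg (unc g) (x, z) (axis j 1, 0)"
    unfolding pz_def by (rule DERIV_imp_deriv[OF d])
qed

lemma Dg_expand:
  assumes "holoP S G" "p \<in> S"
  shows "Dg G p (w, 0) = (\<Sum>i\<in>UNIV. w$i * Dg G p (axis i 1, 0))"
proof -
  have bl: "bounded_linear (Dg G p)" using holoP_D(3)[OF assms] .
  have "(w, 0::complex^_) = (\<Sum>i\<in>UNIV. cm (w$i) (axis i 1, 0))"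
    by (simp add: cm_def sum_prod basis_expansion)
  then have "Dg G p (w, 0) = (\<Sum>i\<in>UNIV. Dg G p (cm (w$i) (axis i 1, 0)))"
    by (simp add: linear_sum[OF bounded_linear.linear[OF bl]])
  then show ?thesis using holoP_D(2)[OF assms] by simp
qed

lemma holoP_const[simp]: "holoP S (\<lambda>p. c)"
  unfolding holoP_def cdiffat_def by (auto intro!: exI[of _ "\<lambda>h. 0"])

lemma holoP_add:
  assumes "holoP S f" "holoP S g" shows "holoP S (\<lambda>p. f p + g p)"
  unfolding holoP_def cdiffat_def
proof
  fix p assume p: "p \<in> S"
  obtain L1 where L1: "(f has_derivative L1) (at p)" "\<forall>c u. L1 (cm c u) = c * L1 u"
    using assms(1) p unfolding holoP_def cdiffat_def by blast
  obtain L2 where L2: "(g has_derivative L2) (at p)" "\<forall>c u. L2 (cm c u) = c * L2 u"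
    using assms(2) p unfolding holoP_def cdiffat_def by blast
  show "\<exists>L. ((\<lambda>p. f p + g p) has_derivative L) (at p) \<and> (\<forall>c u. L (cm c u) = c * L u)"
    by (rule exI[of _ "\<lambda>h. L1 h + L2 h"]) (use L1 L2 has_derivative_add in \<open>auto simp: distrib_left\<close>)
qed

lemma holoP_mult:
  assumes "holoP S f" "holoP S g" shows "holoP S (\<lambda>p. f p * g p)"
  unfolding holoP_def cdiffat_def
proof
  fix p assume p: "p \<in> S"
  obtain L1 where L1: "(f has_derivative L1) (at p)" "\<forall>c u. L1 (cm c u) = c * L1 u"
    using assms(1) p unfolding holoP_def cdiffat_def by blast
  obtain L2 where L2: "(g has_derivative L2) (at p)" "\<forall>c u. L2 (cm c u) = c * L2 u"
    using assms(2) p unfolding holoP_def cdiffat_def by blast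
  show "\<exists>L. ((\<lambda>p. f p * g p) has_derivative L) (at p) \<and> (\<forall>c u. L (cm c u) = c * L u)"
    by (rule exI[of _ "\<lambda>h. f p * L2 h + L1 h * g p"])
       (use L1 L2 has_derivative_mult[OF L1(1) L2(1)] in \<open>auto simp: algebra_simps\<close>)
qed

lemma holoP_sum:
  assumes "finite A" "\<And>a. a \<in> A \<Longrightarrow> holoP S (f a)" shows "holoP S (\<lambda>p. \<Sum>a\<in>A. f a p)"
  using assms by (induction A rule: finite_induct) (auto intro: holoP_add)

lemma holoP_prod:
  assumes "finite A" "\<And>a. a \<in> A \<Longrightarrow> holoP S (f a)" shows "holoP S (\<lambda>p. \<Prod>a\<in>A. f a p)"
  using assms by (induction A rule: finite_induct) (auto intro: holoP_mult)

lemma holoP_cmult: "holoP S f \<Longrightarrow> holoP S (\<lambda>p. c * f p)"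
  by (rule holoP_mult[OF holoP_const])

lemma holoP_sub: "holoP S f \<Longrightarrow> holoP S g \<Longrightarrow> holoP S (\<lambda>p. f p - g p)"
  using holoP_add[of S f "\<lambda>p. (-1) * g p"] holoP_cmult[of S g "-1"] by simp

lemma holoP_comp_lin:
  assumes "holo U f" "bounded_linear A" "\<And>c u. A (cm c u) = c *s A u" "\<And>p. p \<in> S \<Longrightarrow> A p \<in> U"
  shows "holoP S (\<lambda>p. f (A p))"
  unfolding holoP_def cdiffat_def
proof
  fix p assume p: "p \<in> S"
  obtain L where L: "(f has_derivative L) (at (A p))" "\<forall>c v. L (c *s v) = c * L v"
    using assms(1) assms(4)[OF p] unfolding holo_def by blast
  have "((f \<circ> A) has_derivative (L \<circ> A)) (at p)"
    by (rule diff_chain_at[OF bounded_linear_imp_has_derivative[OF assms(2)] L(1)])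
  then show "\<exists>L. ((\<lambda>p. f (A p)) has_derivative L) (at p) \<and> (\<forall>c u. L (cm c u) = c * L u)"
    using L(2) assms(3) by (auto simp: o_def intro!: exI[of _ "L \<circ> A"])
qed

lemma holoP_fst: "holo U f \<Longrightarrow> holoP (U \<times> U) (\<lambda>p. f (fst p))"
  by (rule holoP_comp_lin[where U=U]) (auto simp: cm_def bounded_linear_fst mem_Times_iff)

lemma holoP_snd: "holo U f \<Longrightarrow> holoP (U \<times> U) (\<lambda>p. f (snd p))"
  by (rule holoP_comp_lin[where U=U]) (auto simp: cm_def bounded_linear_snd mem_Times_iff)

lemma holoP_coord: "holoP S (\<lambda>p::(complex^'n::finite) \<times> (complex^'n). fst p $ i - snd p $ i)"
  unfolding holoP_def cdiffat_def
proof
  fix p :: "(complex^'n) \<times> (complex^'n)"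
  have bl: "bounded_linear (\<lambda>p::(complex^'n) \<times> (complex^'n). fst p $ i - snd p $ i)"
    by (intro bounded_linear_sub bounded_linear_compose[OF bounded_linear_vec_nth]
        bounded_linear_fst bounded_linear_snd)
  show "\<exists>L. ((\<lambda>p. fst p $ i - snd p $ i) has_derivative L) (at p) \<and> (\<forall>c u. L (cm c u) = c * L u)"
    by (rule exI[of _ "\<lambda>p. fst p $ i - snd p $ i"])
       (auto simp: bounded_linear_imp_has_derivative[OF bl] cm_def algebra_simps)
qed

lemma holo_const[simp]: "holo U (\<lambda>x. c)"
  unfolding holo_def by (auto intro!: exI[of _ "\<lambda>h. 0"])

lemma holo_mult:
  assumes "holo U f" "holo U g" shows "holo U (\<lambda>x. f x * g x)"
  unfolding holo_def
proof
  fix p assume p: "p \<in> U"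
  obtain L1 where L1: "(f has_derivative L1) (at p)" "\<forall>c u. L1 (c *s u) = c * L1 u"
    using assms(1) p unfolding holo_def by blast
  obtain L2 where L2: "(g has_derivative L2) (at p)" "\<forall>c u. L2 (c *s u) = c * L2 u"
    using assms(2) p unfolding holo_def by blast
  show "\<exists>L. ((\<lambda>x. f x * g x) has_derivative L) (at p) \<and> (\<forall>c v. L (c *s v) = c * L v)"
    by (rule exI[of _ "\<lambda>h. f p * L2 h + L1 h * g p"])
       (use L1 L2 has_derivative_mult[OF L1(1) L2(1)] in \<open>auto simp: algebra_simps\<close>)
qed

lemma holo_prod:
  assumes "finite A" "\<And>a. a \<in> A \<Longrightarrow> holo U (f a)" shows "holo U (\<lambda>x. \<Prod>a\<in>A. f a x)"
  using assms by (induction A rule: finite_induct) (auto intro: holo_mult)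

lemma holo_diag:
  fixes g :: "complex^'n::finite \<Rightarrow> complex^'n \<Rightarrow> complex"
  assumes "holoP (U \<times> U) (unc g)" shows "holo U (\<lambda>x. g x x)"
  unfolding holo_def
proof
  fix x assume x: "x \<in> U"
  have bl: "bounded_linear (\<lambda>v::complex^'n. (v, v))" by (intro bounded_linear_Pair bounded_linear_ident)
  have "((unc g \<circ> (\<lambda>v. (v, v))) has_derivative (Dg (unc g) (x, x) \<circ> (\<lambda>v. (v, v)))) (at x)"
    by (rule diff_chain_at[OF bounded_linear_imp_has_derivative[OF bl]])
       (use holoP_D(1)[OF assms] x in auto)
  then show "\<exists>L. ((\<lambda>x. g x x) has_derivative L) (at x) \<and> (\<forall>c v. L (c *s v) = c * L v)"
    using holoP_D(2)[OF assms, of "(x,x)"] x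
    by (intro exI[of _ "Dg (unc g) (x, x) \<circ> (\<lambda>v. (v, v))"]) (auto simp: o_def unc_def cm_def)
qed



lemma KosD:
  assumes "\<omega> \<in> Kos U q"
  shows "card I \<noteq> q \<Longrightarrow> \<omega> I = (\<lambda>z \<zeta>. 0)"
    and "z \<notin> U \<or> \<zeta> \<notin> U \<Longrightarrow> \<omega> I z \<zeta> = 0"
    and "holoP (U \<times> U) (unc (\<omega> I))"
  using assms unfolding Kos_def by (auto simp: holo2_iff)

lemma KosI:
  assumes "\<And>I. card I \<noteq> q \<Longrightarrow> \<omega> I = (\<lambda>z \<zeta>. 0)"
    "\<And>I z \<zeta>. z \<notin> U \<or> \<zeta> \<notin> U \<Longrightarrow> \<omega> I z \<zeta> = 0"
    "\<And>I. holoP (U \<times> U) (unc (\<omega> I))"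
  shows "\<omega> \<in> Kos U q"
  using assms unfolding Kos_def by (auto simp: holo2_iff)

lemma Kos_zero: "(\<lambda>I z \<zeta>. 0) \<in> Kos U q"
  by (rule KosI) (auto simp: unc_def)

lemma Kos_lin:
  assumes "\<omega>1 \<in> Kos U q" "\<omega>2 \<in> Kos U q"
  shows "(\<lambda>I z \<zeta>. \<omega>1 I z \<zeta> + c * \<omega>2 I z \<zeta>) \<in> Kos U q"
proof (rule KosI)
  fix I show "holoP (U \<times> U) (unc (\<lambda>z \<zeta>. \<omega>1 I z \<zeta> + c * \<omega>2 I z \<zeta>))"
    using holoP_add[OF KosD(3)[OF assms(1)] holoP_cmult[OF KosD(3)[OF assms(2)]]]
    by (simp add: unc_def)
qed (use KosD[OF assms(1)] KosD[OF assms(2)] in auto)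

lemma Kos_sum:
  assumes "finite A" "\<And>a. a \<in> A \<Longrightarrow> \<omega> a \<in> Kos U q"
  shows "(\<lambda>I z \<zeta>. \<Sum>a\<in>A. c a * \<omega> a I z \<zeta>) \<in> Kos U q"
  using assms
proof (induction A rule: finite_induct)
  case empty then show ?case using Kos_zero by simp
next
  case (insert x F)
  have "(\<lambda>I z \<zeta>. (\<Sum>a\<in>F. c a * \<omega> a I z \<zeta>) + c x * \<omega> x I z \<zeta>) \<in> Kos U q"
    using Kos_lin[OF insert.IH insert.prems[of x]] insert.prems by auto
  then show ?case using insert.hyps by (simp add: add.commute)
qed

lemma pz_zero[simp]: "pz j (\<lambda>x z. 0) x z = 0"
  by (simp add: pz_def)

lemma pz_lin:
  assumes "holoP S (unc A)" "holoP S (unc B)" "(x, z) \<in> S"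
  shows "pz j (\<lambda>x z. A x z + c * B x z) x z = pz j A x z + c * pz j B x z"
proof -
  have "((\<lambda>w. A (upd x j w) z + c * B (upd x j w) z) has_field_derivative
          (Dg (unc A) (x, z) (axis j 1, 0) + c * Dg (unc B) (x, z) (axis j 1, 0))) (at (x$j))"
    by (intro DERIV_add DERIV_cmult pz_deriv(1)[OF assms(1,3)] pz_deriv(1)[OF assms(2,3)])
  then show ?thesis
    unfolding pz_deriv(2)[OF assms(1,3)] pz_deriv(2)[OF assms(2,3)]
    by (simp add: pz_def DERIV_imp_deriv)
qed

lemma seg_in:
  assumes "convex U" "z \<in> U" "\<zeta> \<in> U" "t \<in> {0..1}"
  shows "\<zeta> + t *\<^sub>R (z - \<zeta>) \<in> U"
proof -
  have "(1 - t) *\<^sub>R \<zeta> + t *\<^sub>R z \<in> U"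
    using assms unfolding convex_def by auto
  moreover have "(1 - t) *\<^sub>R \<zeta> + t *\<^sub>R z = \<zeta> + t *\<^sub>R (z - \<zeta>)" by (simp add: algebra_simps)
  ultimately show ?thesis by simp
qed

lemma seg_cont:
  assumes "holoP (U \<times> U) (unc g)" "convex U" "z \<in> U" "\<zeta> \<in> U"
  shows "continuous_on {0..1} (\<lambda>t. g (\<zeta> + t *\<^sub>R (z - \<zeta>)) \<zeta>)"
proof -
  have c1: "continuous_on {0..1} (\<lambda>t::real. (\<zeta> + t *\<^sub>R (z - \<zeta>), \<zeta>))"
    by (intro continuous_intros)
  have "continuous_on {0..1} (\<lambda>t. unc g (\<zeta> + t *\<^sub>R (z - \<zeta>), \<zeta>))"
    by (rule continuous_on_compose2[OF holoP_cont[OF assms(1)] c1])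
       (use seg_in[OF assms(2-4)] assms(4) in auto)
  then show ?thesis by (simp add: unc_def)
qed

lemma holoP_pz:
  assumes "open U" "holoP (U \<times> U) (unc g)"
  shows "holoP (U \<times> U) (unc (pz j g))"
proof (rule holoP_transform[OF holoP_Dg_dir[OF _ assms(2), of "(axis j 1, 0)"]])
  show "open (U \<times> U)" using assms(1) by (simp add: open_Times)
  fix p assume "p \<in> U \<times> U"
  then show "Dg (unc g) p (axis j 1, 0) = unc (pz j g) p"
    using pz_deriv(2)[OF assms(2), of "fst p" "snd p" j] by (simp add: unc_def)
qed (use assms(1) in \<open>simp add: open_Times\<close>)

lemma seg_intg:
  assumes "holoP (U \<times> U) (unc g)" "convex U" "z \<in> U" "\<zeta> \<in> U"
  shows "(\<lambda>t. of_real (t^k) * g (\<zeta> + t *\<^sub>R (z - \<zeta>)) \<zeta>) integrable_on {0..1}"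
  by (intro integrable_continuous_interval continuous_intros seg_cont[OF assms])

lemma Pop_zero: "Pop U (\<lambda>I z \<zeta>. 0) = (\<lambda>I z \<zeta>. 0)"
  by (simp add: Pop_def fun_eq_iff)

lemma Pop_Kos:
  fixes U :: "(complex^'n::{finite,linorder}) set"
  assumes U: "open U" "convex U" and \<omega>: "\<omega> \<in> Kos U q"
  shows "Pop U \<omega> \<in> Kos U (Suc q)"
proof (rule KosI)
  fix J :: "'n set" assume J: "card J \<noteq> Suc q"
  have "card (J - {j}) \<noteq> q" if "j \<in> J" for j
    using J that by (simp add: card_Diff_singleton) (metis One_nat_def Suc_pred card_gt_0_iff finite empty_iff)
  then show "Pop U \<omega> J = (\<lambda>z \<zeta>. 0)"
    by (auto simp: Pop_def KosD(1)[OF \<omega>] fun_eq_iff intro!: sum.neutral)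
next
  fix J :: "'n set" and z \<zeta> assume "z \<notin> U \<or> \<zeta> \<notin> U"
  then show "Pop U \<omega> J z \<zeta> = 0" by (auto simp: Pop_def)
next
  fix J :: "'n set"
  have UU: "open (U \<times> U)" using U by (simp add: open_Times)
  define Q where "Q j p = integral {0..1} (\<lambda>t. of_real (t ^ (card J - 1)) *
      unc (pz j (\<omega> (J - {j}))) (snd p + t *\<^sub>R (fst p - snd p), snd p))" for j p
  have hQ: "holoP (U \<times> U) (Q j)" for j
    unfolding Q_def by (rule holoP_segint[OF U holoP_pz[OF U(1) KosD(3)[OF \<omega>]]])
  have "holoP (U \<times> U) (\<lambda>p. \<Sum>j\<in>J. sgnK j (J - {j}) * Q j p)"
    by (intro holoP_sum holoP_cmult hQ) auto
  then show "holoP (U \<times> U) (unc (Pop U \<omega> J))"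
    by (rule holoP_transform[OF _ UU]) (auto simp: Q_def unc_def Pop_def mem_Times_iff)
qed

lemma Pop_lin:
  fixes U :: "(complex^'n::{finite,linorder}) set"
  assumes U: "open U" "convex U" and \<omega>: "\<omega>1 \<in> Kos U q" "\<omega>2 \<in> Kos U q"
  shows "Pop U (\<lambda>I z \<zeta>. \<omega>1 I z \<zeta> + c * \<omega>2 I z \<zeta>) = (\<lambda>J z \<zeta>. Pop U \<omega>1 J z \<zeta> + c * Pop U \<omega>2 J z \<zeta>)"
proof (intro ext)
  fix J z \<zeta>
  show "Pop U (\<lambda>I z \<zeta>. \<omega>1 I z \<zeta> + c * \<omega>2 I z \<zeta>) J z \<zeta> = Pop U \<omega>1 J z \<zeta> + c * Pop U \<omega>2 J z \<zeta>"
  proof (cases "z \<in> U \<and> \<zeta> \<in> U")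
    case False then show ?thesis by (auto simp: Pop_def)
  next
    case True
    have eq: "integral {0..1} (\<lambda>t. of_real (t ^ (card J - 1)) *
          pz j (\<lambda>x y. \<omega>1 (J - {j}) x y + c * \<omega>2 (J - {j}) x y) (\<zeta> + t *\<^sub>R (z - \<zeta>)) \<zeta>) =
        integral {0..1} (\<lambda>t. of_real (t ^ (card J - 1)) * pz j (\<omega>1 (J - {j})) (\<zeta> + t *\<^sub>R (z - \<zeta>)) \<zeta>) +
        c * integral {0..1} (\<lambda>t. of_real (t ^ (card J - 1)) * pz j (\<omega>2 (J - {j})) (\<zeta> + t *\<^sub>R (z - \<zeta>)) \<zeta>)"
      for j
    proof -
      have i1: "(\<lambda>t. of_real (t ^ (card J - 1)) * pz j (\<omega>1 (J - {j})) (\<zeta> + t *\<^sub>R (z - \<zeta>)) \<zeta>) integrable_on {0..1}"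
        by (rule seg_intg[OF holoP_pz[OF U(1) KosD(3)[OF \<omega>(1)]] U(2)]) (use True in auto)
      have i2: "(\<lambda>t. c * (of_real (t ^ (card J - 1)) * pz j (\<omega>2 (J - {j})) (\<zeta> + t *\<^sub>R (z - \<zeta>)) \<zeta>)) integrable_on {0..1}"
        by (intro integrable_on_mult_right seg_intg[OF holoP_pz[OF U(1) KosD(3)[OF \<omega>(2)]] U(2)]) (use True in auto)
      have "integral {0..1} (\<lambda>t. of_real (t ^ (card J - 1)) *
          pz j (\<lambda>x y. \<omega>1 (J - {j}) x y + c * \<omega>2 (J - {j}) x y) (\<zeta> + t *\<^sub>R (z - \<zeta>)) \<zeta>) =
          integral {0..1} (\<lambda>t. of_real (t ^ (card J - 1)) * pz j (\<omega>1 (J - {j})) (\<zeta> + t *\<^sub>R (z - \<zeta>)) \<zeta> +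
             c * (of_real (t ^ (card J - 1)) * pz j (\<omega>2 (J - {j})) (\<zeta> + t *\<^sub>R (z - \<zeta>)) \<zeta>))"
      proof (rule integral_cong)
        fix t :: real assume t: "t \<in> {0..1}"
        have "(\<zeta> + t *\<^sub>R (z - \<zeta>), \<zeta>) \<in> U \<times> U" using seg_in[OF U(2) _ _ t] True by auto
        then show "of_real (t ^ (card J - 1)) *
          pz j (\<lambda>x y. \<omega>1 (J - {j}) x y + c * \<omega>2 (J - {j}) x y) (\<zeta> + t *\<^sub>R (z - \<zeta>)) \<zeta> =
          of_real (t ^ (card J - 1)) * pz j (\<omega>1 (J - {j})) (\<zeta> + t *\<^sub>R (z - \<zeta>)) \<zeta> +
             c * (of_real (t ^ (card J - 1)) * pz j (\<omega>2 (J - {j})) (\<zeta> + t *\<^sub>R (z - \<zeta>)) \<zeta>)"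
          using pz_lin[OF KosD(3)[OF \<omega>(1)] KosD(3)[OF \<omega>(2)], where j=j and c=c]
          by (simp add: algebra_simps)
      qed
      also have "\<dots> = integral {0..1} (\<lambda>t. of_real (t ^ (card J - 1)) * pz j (\<omega>1 (J - {j})) (\<zeta> + t *\<^sub>R (z - \<zeta>)) \<zeta>) +
        integral {0..1} (\<lambda>t. c * (of_real (t ^ (card J - 1)) * pz j (\<omega>2 (J - {j})) (\<zeta> + t *\<^sub>R (z - \<zeta>)) \<zeta>))"
        by (rule integral_add[OF i1 i2])
      finally show ?thesis by simp
    qed
    have TT: "(z \<in> U \<and> \<zeta> \<in> U) = True" using True by simp
    show ?thesis unfolding Pop_def TT if_True eq
      by (simp add: sum.distrib sum_distrib_left algebra_simps)
  qed
qed

lemma Pop_sum: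
  fixes U :: "(complex^'n::{finite,linorder}) set"
  assumes U: "open U" "convex U" and fin: "finite A" and \<omega>: "\<And>a. a \<in> A \<Longrightarrow> \<omega> a \<in> Kos U q"
  shows "Pop U (\<lambda>I z \<zeta>. \<Sum>a\<in>A. c a * \<omega> a I z \<zeta>) = (\<lambda>J z \<zeta>. \<Sum>a\<in>A. c a * Pop U (\<omega> a) J z \<zeta>)"
  using fin \<omega>
proof (induction A rule: finite_induct)
  case empty then show ?case by (simp add: Pop_zero)
next
  case (insert x F)
  have k: "(\<lambda>I z \<zeta>. \<Sum>a\<in>F. c a * \<omega> a I z \<zeta>) \<in> Kos U q"
    by (rule Kos_sum) (use insert in auto)
  have "Pop U (\<lambda>I z \<zeta>. (\<Sum>a\<in>F. c a * \<omega> a I z \<zeta>) + c x * \<omega> x I z \<zeta>) =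
     (\<lambda>J z \<zeta>. Pop U (\<lambda>I z \<zeta>. \<Sum>a\<in>F. c a * \<omega> a I z \<zeta>) J z \<zeta> + c x * Pop U (\<omega> x) J z \<zeta>)"
    by (rule Pop_lin[OF U k insert.prems[of x]]) simp
  then show ?case using insert by (simp add: add.commute)
qed

lemma dK_zero: "dK U (\<lambda>I z \<zeta>. 0) = (\<lambda>I z \<zeta>. 0)"
  by (simp add: dK_def fun_eq_iff)

lemma dK_Kos:
  fixes U :: "(complex^'n::{finite,linorder}) set"
  assumes U: "open U" and \<omega>: "\<omega> \<in> Kos U (Suc q)"
  shows "dK U \<omega> \<in> Kos U q"
proof (rule KosI)
  fix K :: "'n set" assume K: "card K \<noteq> q"
  have "card (insert i K) \<noteq> Suc q" if "i \<notin> K" for i using K that by simp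
  then show "dK U \<omega> K = (\<lambda>z \<zeta>. 0)"
    by (auto simp: dK_def KosD(1)[OF \<omega>] fun_eq_iff intro!: sum.neutral)
next
  fix K :: "'n set" and z \<zeta> assume "z \<notin> U \<or> \<zeta> \<notin> U"
  then show "dK U \<omega> K z \<zeta> = 0" by (auto simp: dK_def)
next
  fix K :: "'n set"
  have UU: "open (U \<times> U)" using U by (simp add: open_Times)
  have "holoP (U \<times> U) (\<lambda>p. \<Sum>i\<in>UNIV - K. sgnK i K * (fst p $ i - snd p $ i) * unc (\<omega> (insert i K)) p)"
    by (intro holoP_sum holoP_mult holoP_cmult holoP_coord KosD(3)[OF \<omega>]) auto
  then show "holoP (U \<times> U) (unc (dK U \<omega> K))"
    by (rule holoP_transform[OF _ UU]) (auto simp: unc_def dK_def mem_Times_iff mult.assoc)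
qed

lemma dK_Kos0:
  assumes \<omega>: "\<omega> \<in> Kos U 0"
  shows "dK U \<omega> = (\<lambda>I z \<zeta>. 0)"
  using KosD(1)[OF \<omega>] by (auto simp: dK_def fun_eq_iff intro!: sum.neutral)

lemma bl_smult: "bounded_linear (\<lambda>c::complex. c *s (v::complex^'n::finite))"
proof (rule bounded_linear_intro[where K="norm v"])
  fix x y :: complex show "(x + y) *s v = x *s v + y *s v" by (simp add: vector_sadd_rdistrib)
next
  fix r :: real and x :: complex show "(r *\<^sub>R x) *s v = r *\<^sub>R (x *s v)"
    by (simp add: vec_eq_iff)
next
  fix x :: complex show "norm (x *s v) \<le> norm x * norm v" using norm_smult_vec[of x v] by simp
qed

lemma upd_self[simp]: "upd x j (x$j) = x"
  by (simp add: upd_def vec_eq_iff)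

lemma upd_nth: "upd x j w $ i = (if i = j then w else x $ i)"
  by (simp add: upd_def)

lemma pz_dK:
  fixes U :: "(complex^'n::{finite,linorder}) set"
  assumes U: "open U" and \<omega>: "\<omega> \<in> Kos U q" and x: "x \<in> U" and z: "\<zeta> \<in> U"
  shows "pz j (dK U \<omega> K) x \<zeta> = (\<Sum>i\<in>UNIV - K. sgnK i K *
            ((if i = j then 1 else 0) * \<omega> (insert i K) x \<zeta> + (x$i - \<zeta>$i) * pz j (\<omega> (insert i K)) x \<zeta>))"
proof -
  define F where "F w = (\<Sum>i\<in>UNIV - K. sgnK i K * ((upd x j w $ i - \<zeta>$i) * \<omega> (insert i K) (upd x j w) \<zeta>))" for w
  have xz: "(x, \<zeta>) \<in> U \<times> U" using x z by simp
  have dc: "((\<lambda>w. upd x j w $ i - \<zeta>$i) has_field_derivative (if i = j then 1 else 0)) (at (x$j))" for i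
    by (cases "i = j") (auto simp: upd_nth intro!: derivative_eq_intros)
  have "(F has_field_derivative (\<Sum>i\<in>UNIV - K. sgnK i K *
          ((if i = j then 1 else 0) * \<omega> (insert i K) (upd x j (x$j)) \<zeta> +
            pz j (\<omega> (insert i K)) x \<zeta> * (upd x j (x$j) $ i - \<zeta>$i)))) (at (x$j))"
    unfolding F_def
    by (intro DERIV_sum DERIV_cmult DERIV_mult dc pz_deriv(1)[OF KosD(3)[OF \<omega>] xz, folded pz_deriv(2)[OF KosD(3)[OF \<omega>] xz]])
  then have dF: "(F has_field_derivative (\<Sum>i\<in>UNIV - K. sgnK i K *
            ((if i = j then 1 else 0) * \<omega> (insert i K) x \<zeta> + (x$i - \<zeta>$i) * pz j (\<omega> (insert i K)) x \<zeta>))) (at (x$j))"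
    by (simp add: mult.commute)
  define W where "W = (\<lambda>w. upd x j w) -` U"
  have W: "open W" "x$j \<in> W"
  proof -
    have "isCont (\<lambda>w. upd x j w) w" for w unfolding upd_eq
      by (intro continuous_intros isCont_o2[OF _ linear_continuous_at[OF bl_smult]])
    then show "open W" unfolding W_def by (rule continuous_open_vimage[OF U])
    show "x$j \<in> W" using x by (simp add: W_def)
  qed
  have "((\<lambda>w. dK U \<omega> K (upd x j w) \<zeta>) has_field_derivative (\<Sum>i\<in>UNIV - K. sgnK i K *
            ((if i = j then 1 else 0) * \<omega> (insert i K) x \<zeta> + (x$i - \<zeta>$i) * pz j (\<omega> (insert i K)) x \<zeta>))) (at (x$j))"
    by (rule has_field_derivative_transform_within_open[OF dF W]) (use z in \<open>auto simp: W_def F_def dK_def mult.assoc\<close>)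
  then show ?thesis unfolding pz_def by (rule DERIV_imp_deriv)
qed



lemma sgnK_sq[simp]: "sgnK i I * sgnK i I = 1"
  by (simp add: sgnK_def power_mult_distrib[symmetric] power_add[symmetric] mult_2[symmetric]
      flip: power_add)

lemma sgn_swap:
  fixes I :: "'n::{finite,linorder} set"
  assumes j: "j \<in> I" and i: "i \<notin> I"
  shows "sgnK i I * sgnK j (insert i I - {j}) = - (sgnK j (I - {j}) * sgnK i (I - {j}))"
proof -
  have ij: "i \<noteq> j" using i j by auto
  have e1: "{l\<in>I. l < i} = (if j < i then insert j {l\<in>I - {j}. l < i} else {l\<in>I - {j}. l < i})"
    using j by auto
  have c1: "card {l\<in>I. l < i} = card {l\<in>I - {j}. l < i} + (if j < i then 1 else 0)"
    by (subst e1) auto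
  have e2: "{l\<in>insert i I - {j}. l < j} = (if i < j then insert i {l\<in>I - {j}. l < j} else {l\<in>I - {j}. l < j})"
    using ij by auto
  have c2: "card {l\<in>insert i I - {j}. l < j} = card {l\<in>I - {j}. l < j} + (if i < j then 1 else 0)"
    by (subst e2) (use i in auto)
  show ?thesis
  proof (cases "i < j")
    case True
    then have "\<not> j < i" by auto
    then show ?thesis using True c1 c2 by (simp add: sgnK_def power_add)
  next
    case False
    then have "j < i" using ij by auto
    then show ?thesis using False c1 c2 by (simp add: sgnK_def power_add)
  qed
qed

lemma lin4: "A + C = 0 \<Longrightarrow> B + D = (E::complex) \<Longrightarrow> A + (B + (C + D)) = E"
  by (metis add.assoc add.left_commute add_0)

lemma comb:
  fixes I :: "'n::{finite,linorder} set" and a :: "'n set \<Rightarrow> 'n \<Rightarrow> complex" and b :: "'n set \<Rightarrow> complex"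
  assumes TT: "q \<ge> 1 \<Longrightarrow> T = t * T'" and cI: "card I = q"
  shows "(\<Sum>i\<in>UNIV - I. sgnK i I * W i * (\<Sum>j\<in>insert i I. sgnK j (insert i I - {j}) * (T * a (insert i I - {j}) j)))
       + (\<Sum>j\<in>I. sgnK j (I - {j}) * (T' * (\<Sum>i\<in>UNIV - (I - {j}). sgnK i (I - {j}) *
            ((if i = j then 1 else 0) * b (insert i (I - {j})) + t * W i * a (insert i (I - {j})) j))))
       = of_nat q * T' * b I + T * (\<Sum>i\<in>UNIV. W i * a I i)"
proof -
  define X where "X i j = sgnK i I * sgnK j (insert i I - {j}) * (T * W i * a (insert i (I - {j})) j)" for i j
  define Y where "Y i j = sgnK j (I - {j}) * sgnK i (I - {j}) * (T * W i * a (insert i (I - {j})) j)" for i j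
  have XY: "X i j = - Y i j" if "i \<in> UNIV - I" "j \<in> I" for i j
    using sgn_swap[of j I i] that unfolding X_def Y_def by (simp add: algebra_simps)
  have S1: "(\<Sum>i\<in>UNIV - I. sgnK i I * W i * (\<Sum>j\<in>insert i I. sgnK j (insert i I - {j}) * (T * a (insert i I - {j}) j)))
      = (\<Sum>i\<in>UNIV - I. T * W i * a I i + (\<Sum>j\<in>I. X i j))"
  proof (rule sum.cong[OF refl])
    fix i assume i: "i \<in> UNIV - I"
    have e: "insert i I - {i} = I" using i by auto
    have e2: "insert i I - {j} = insert i (I - {j})" if "j \<in> I" for j using that i by auto
    have "(\<Sum>j\<in>insert i I. sgnK j (insert i I - {j}) * (T * a (insert i I - {j}) j)) =
        sgnK i I * (T * a I i) + (\<Sum>j\<in>I. sgnK j (insert i I - {j}) * (T * a (insert i (I - {j})) j))"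
      using i by (simp add: sum.insert e e2 cong: sum.cong)
    then show "sgnK i I * W i * (\<Sum>j\<in>insert i I. sgnK j (insert i I - {j}) * (T * a (insert i I - {j}) j))
        = T * W i * a I i + (\<Sum>j\<in>I. X i j)"
      unfolding X_def
      by (simp add: distrib_left sum_distrib_left algebra_simps)
  qed
  have S2: "(\<Sum>j\<in>I. sgnK j (I - {j}) * (T' * (\<Sum>i\<in>UNIV - (I - {j}). sgnK i (I - {j}) *
            ((if i = j then 1 else 0) * b (insert i (I - {j})) + t * W i * a (insert i (I - {j})) j))))
      = (\<Sum>j\<in>I. T' * b I + T * W j * a I j + (\<Sum>i\<in>UNIV - I. Y i j))"
  proof (rule sum.cong[OF refl])
    fix j assume j: "j \<in> I"
    then have q1: "q \<ge> 1" using cI by (metis One_nat_def Suc_leI card_gt_0_iff empty_iff finite)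
    have e: "UNIV - (I - {j}) = insert j (UNIV - I)" using j by auto
    have e2: "insert j (I - {j}) = I" using j by auto
    have "(\<Sum>i\<in>UNIV - (I - {j}). sgnK i (I - {j}) *
            ((if i = j then 1 else 0) * b (insert i (I - {j})) + t * W i * a (insert i (I - {j})) j))
        = sgnK j (I - {j}) * (b I + t * W j * a I j) +
          (\<Sum>i\<in>UNIV - I. sgnK i (I - {j}) * (t * W i * a (insert i (I - {j})) j))"
      unfolding e using j by (subst sum.insert) (auto simp: insert_absorb[OF j] intro!: sum.cong)
    then show "sgnK j (I - {j}) * (T' * (\<Sum>i\<in>UNIV - (I - {j}). sgnK i (I - {j}) *
            ((if i = j then 1 else 0) * b (insert i (I - {j})) + t * W i * a (insert i (I - {j})) j)))
        = T' * b I + T * W j * a I j + (\<Sum>i\<in>UNIV - I. Y i j)"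
      unfolding Y_def TT[OF q1]
      by (simp add: distrib_left sum_distrib_left algebra_simps)
  qed
  have cross: "(\<Sum>i\<in>UNIV - I. \<Sum>j\<in>I. X i j) + (\<Sum>j\<in>I. \<Sum>i\<in>UNIV - I. Y i j) = 0"
  proof -
    have "(\<Sum>i\<in>UNIV - I. \<Sum>j\<in>I. X i j) = (\<Sum>i\<in>UNIV - I. \<Sum>j\<in>I. - Y i j)"
      by (intro sum.cong refl XY) auto
    also have "\<dots> = - (\<Sum>j\<in>I. \<Sum>i\<in>UNIV - I. Y i j)"
      by (subst sum.swap) (simp add: sum_negf)
    finally show ?thesis by simp
  qed
  have diag: "(\<Sum>i\<in>UNIV - I. T * W i * a I i) + (\<Sum>j\<in>I. T * W j * a I j) = T * (\<Sum>i\<in>UNIV. W i * a I i)"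
  proof -
    have "(\<Sum>i\<in>UNIV - I. T * W i * a I i) + (\<Sum>j\<in>I. T * W j * a I j) = (\<Sum>i\<in>UNIV. T * W i * a I i)"
      by (subst sum.subset_diff[of I UNIV]) auto
    then show ?thesis by (simp add: sum_distrib_left mult.assoc)
  qed
  show ?thesis
    unfolding S1 S2 sum.distrib
    using cross diag cI by (simp add: algebra_simps) (rule lin4; assumption)
qed

lemma homotopy:
  fixes U :: "(complex^'n::{finite,linorder}) set"
  assumes U: "open U" "convex U" and \<omega>: "\<omega> \<in> Kos U q" and z: "z \<in> U" and \<zeta>: "\<zeta> \<in> U"
  shows "dK U (Pop U \<omega>) I z \<zeta> + Pop U (dK U \<omega>) I z \<zeta> = \<omega> I z \<zeta> - (if q = 0 then \<omega> I \<zeta> \<zeta> else 0)"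
proof (cases "card I = q")
  case False
  have P: "Pop U \<omega> \<in> Kos U (Suc q)" by (rule Pop_Kos[OF U \<omega>])
  have 1: "dK U (Pop U \<omega>) I z \<zeta> = 0"
    using False by (auto simp: dK_def KosD(1)[OF P] intro!: sum.neutral)
  have 2: "Pop U (dK U \<omega>) I z \<zeta> = 0"
  proof (cases q)
    case 0 then show ?thesis using dK_Kos0[of \<omega> U] \<omega> by (simp add: Pop_zero)
  next
    case (Suc q')
    have "Pop U (dK U \<omega>) \<in> Kos U (Suc q')"
      by (rule Pop_Kos[OF U dK_Kos[OF U(1)]]) (use \<omega> Suc in simp)
    then show ?thesis using KosD(1)[of "Pop U (dK U \<omega>)" U "Suc q'" I] False Suc by simp
  qed
  show ?thesis using 1 2 KosD(1)[OF \<omega> False] by simp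
next
  case True
  note cI = True
  define \<gamma> where "\<gamma> t = \<zeta> + t *\<^sub>R (z - \<zeta>)" for t :: real
  define A where "A K j t = pz j (\<omega> K) (\<gamma> t) \<zeta>" for K j t
  define B where "B K t = \<omega> K (\<gamma> t) \<zeta>" for K t
  have \<gamma>U: "\<gamma> t \<in> U" if "t \<in> {0..1}" for t unfolding \<gamma>_def by (rule seg_in[OF U(2) z \<zeta> that])
  have contA: "continuous_on {0..1} (A K j)" for K j
    unfolding A_def \<gamma>_def by (rule seg_cont[OF holoP_pz[OF U(1) KosD(3)[OF \<omega>]] U(2) z \<zeta>])
  have contB: "continuous_on {0..1} (B K)" for K
    unfolding B_def \<gamma>_def by (rule seg_cont[OF KosD(3)[OF \<omega>] U(2) z \<zeta>])
  have L1: "dK U (Pop U \<omega>) I z \<zeta> = (\<Sum>i\<in>UNIV - I. sgnK i I * (z$i - \<zeta>$i) *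
      (\<Sum>j\<in>insert i I. sgnK j (insert i I - {j}) * integral {0..1} (\<lambda>t. of_real (t^q) * A (insert i I - {j}) j t)))"
    unfolding dK_def using z \<zeta>
    by (auto simp: Pop_def A_def \<gamma>_def cI intro!: sum.cong)
  have H1: "((\<lambda>t. \<Sum>i\<in>UNIV - I. sgnK i I * (z$i - \<zeta>$i) *
      (\<Sum>j\<in>insert i I. sgnK j (insert i I - {j}) * (of_real (t^q) * A (insert i I - {j}) j t)))
      has_integral dK U (Pop U \<omega>) I z \<zeta>) {0..1}"
    unfolding L1
    by (intro has_integral_sum has_integral_mult_right integrable_integral integrable_continuous_interval
        continuous_intros contA) auto
  define P where "P j t = (\<Sum>i\<in>UNIV - (I - {j}). sgnK i (I - {j}) *
       ((if i = j then 1 else 0) * B (insert i (I - {j})) t + of_real t * (z$i - \<zeta>$i) * A (insert i (I - {j})) j t))"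
    for j t
  have contP: "continuous_on {0..1} (P j)" for j
    unfolding P_def by (intro continuous_intros contA contB)
  have gi: "\<gamma> t $ i - \<zeta> $ i = of_real t * (z$i - \<zeta>$i)" for t i
  proof -
    have "\<gamma> t $ i - \<zeta> $ i = t *\<^sub>R (z$i - \<zeta>$i)" by (simp add: \<gamma>_def)
    then show ?thesis by (simp add: scaleR_conv_of_real)
  qed
  have pzP: "pz j (dK U \<omega> (I - {j})) (\<gamma> t) \<zeta> = P j t" if "t \<in> {0..1}" for j t
    unfolding P_def pz_dK[OF U(1) \<omega> \<gamma>U[OF that] \<zeta>] A_def B_def gi by (rule refl)
  have L2: "Pop U (dK U \<omega>) I z \<zeta> = (\<Sum>j\<in>I. sgnK j (I - {j}) * integral {0..1} (\<lambda>t. of_real (t^(q-1)) * P j t))"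
    unfolding Pop_def using z \<zeta>
    by (auto simp: cI \<gamma>_def[symmetric] pzP intro!: sum.cong integral_cong)
  have H2: "((\<lambda>t. \<Sum>j\<in>I. sgnK j (I - {j}) * (of_real (t^(q-1)) * P j t))
      has_integral Pop U (dK U \<omega>) I z \<zeta>) {0..1}"
    unfolding L2
    by (intro has_integral_sum has_integral_mult_right integrable_integral integrable_continuous_interval
        continuous_intros contP) auto
  define f where "f t = t^q *\<^sub>R B I t" for t
  define f' where "f' t = t^q *\<^sub>R (\<Sum>i\<in>UNIV. (z$i - \<zeta>$i) * A I i t) + (real q * t^(q-1)) *\<^sub>R B I t" for t
  have dB: "(B I has_vector_derivative (\<Sum>i\<in>UNIV. (z$i - \<zeta>$i) * A I i t)) (at t within {0..1})"
    if t: "t \<in> {0..1}" for t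
  proof -
    have hI: "holoP (U \<times> U) (unc (\<omega> I))" by (rule KosD(3)[OF \<omega>])
    have pt: "(\<gamma> t, \<zeta>) \<in> U \<times> U" using \<gamma>U[OF t] \<zeta> by simp
    have d1: "((\<lambda>t. (\<gamma> t, \<zeta>)) has_vector_derivative (z - \<zeta>, 0)) (at t within {0..1})"
    proof -
      have "((\<lambda>t. \<zeta> + t *\<^sub>R (z - \<zeta>)) has_vector_derivative (0 + (t *\<^sub>R 0 + 1 *\<^sub>R (z - \<zeta>)))) (at t within {0..1})"
        by (intro has_vector_derivative_add has_vector_derivative_const has_vector_derivative_scaleR DERIV_ident)
      then have g: "((\<lambda>t. \<zeta> + t *\<^sub>R (z - \<zeta>)) has_vector_derivative (z - \<zeta>)) (at t within {0..1})"
        by simp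
      show ?thesis unfolding \<gamma>_def by (rule has_vector_derivative_Pair[OF g has_vector_derivative_const])
    qed
    have "((unc (\<omega> I) \<circ> (\<lambda>t. (\<gamma> t, \<zeta>))) has_vector_derivative Dg (unc (\<omega> I)) (\<gamma> t, \<zeta>) (z - \<zeta>, 0))
        (at t within {0..1})"
      by (rule vector_derivative_diff_chain_within[OF d1])
         (rule has_derivative_at_withinI[OF holoP_D(1)[OF hI pt]])
    moreover have "Dg (unc (\<omega> I)) (\<gamma> t, \<zeta>) (z - \<zeta>, 0) = (\<Sum>i\<in>UNIV. (z$i - \<zeta>$i) * A I i t)"
    proof -
      have "Dg (unc (\<omega> I)) (\<gamma> t, \<zeta>) (z - \<zeta>, 0) = (\<Sum>i\<in>UNIV. (z - \<zeta>)$i * Dg (unc (\<omega> I)) (\<gamma> t, \<zeta>) (axis i 1, 0))"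
        by (rule Dg_expand[OF hI pt])
      also have "\<dots> = (\<Sum>i\<in>UNIV. (z$i - \<zeta>$i) * A I i t)"
        by (simp add: A_def pz_deriv(2)[OF hI pt])
      finally show ?thesis .
    qed
    moreover have "(unc (\<omega> I) \<circ> (\<lambda>t. (\<gamma> t, \<zeta>))) = B I" by (simp add: B_def o_def unc_def fun_eq_iff)
    ultimately show ?thesis by simp
  qed
  have df: "(f has_vector_derivative f' t) (at t within {0..1})" if "t \<in> {0..1}" for t
    unfolding f_def f'_def
    by (intro has_vector_derivative_scaleR dB[OF that] derivative_eq_intros) auto
  have FTC: "(f' has_integral (f 1 - f 0)) {0..1}"
    by (rule fundamental_theorem_of_calculus) (use df in auto)
  have pw: "(\<Sum>i\<in>UNIV - I. sgnK i I * (z$i - \<zeta>$i) *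
      (\<Sum>j\<in>insert i I. sgnK j (insert i I - {j}) * (of_real (t^q) * A (insert i I - {j}) j t)))
      + (\<Sum>j\<in>I. sgnK j (I - {j}) * (of_real (t^(q-1)) * P j t)) = f' t" for t
  proof -
    have TT: "(of_real (t^q) :: complex) = of_real t * of_real (t^(q-1))" if q1: "q \<ge> 1"
    proof -
      obtain m where "q = Suc m" using q1 by (cases q) auto
      then show ?thesis by simp
    qed
    show ?thesis
      using comb[OF TT cI, where W="\<lambda>i. z$i - \<zeta>$i" and a="\<lambda>K j. A K j t" and b="\<lambda>K. B K t"]
      unfolding P_def f'_def by (simp add: scaleR_conv_of_real algebra_simps)
  qed
  have "((\<lambda>t. (\<Sum>i\<in>UNIV - I. sgnK i I * (z$i - \<zeta>$i) *
      (\<Sum>j\<in>insert i I. sgnK j (insert i I - {j}) * (of_real (t^q) * A (insert i I - {j}) j t)))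
      + (\<Sum>j\<in>I. sgnK j (I - {j}) * (of_real (t^(q-1)) * P j t)))
      has_integral dK U (Pop U \<omega>) I z \<zeta> + Pop U (dK U \<omega>) I z \<zeta>) {0..1}"
    by (rule has_integral_add[OF H1 H2])
  then have "(f' has_integral dK U (Pop U \<omega>) I z \<zeta> + Pop U (dK U \<omega>) I z \<zeta>) {0..1}"
    unfolding pw .
  then have "dK U (Pop U \<omega>) I z \<zeta> + Pop U (dK U \<omega>) I z \<zeta> = f 1 - f 0"
    using FTC has_integral_unique by blast
  also have "\<dots> = \<omega> I z \<zeta> - (if q = 0 then \<omega> I \<zeta> \<zeta> else 0)"
    by (simp add: f_def B_def \<gamma>_def)
  finally show ?thesis .
qed



definition Dl :: "nat \<Rightarrow> 'a list \<Rightarrow> 'a list" where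
  "Dl i xs = take (Suc i) xs @ drop i xs"

lemma barD_Dl: "barD U q F = (\<lambda>xs. if length xs = q + 1 \<and> set xs \<subseteq> U
      then (\<Sum>i\<le>q. (-1) ^ i * F (Dl i xs)) else 0)"
  unfolding barD_def Dl_def by (rule refl)

lemma barD_out:
  assumes "\<not> (length xs = q + 1 \<and> set xs \<subseteq> U)" shows "barD U q F xs = 0"
  unfolding barD_def by (simp only: if_not_P[OF assms])

lemma barD_in:
  assumes "length xs = q + 1 \<and> set xs \<subseteq> U" shows "barD U q F xs = (\<Sum>i\<le>q. (-1) ^ i * F (Dl i xs))"
  unfolding barD_Dl by (simp only: if_P[OF assms])

lemma length_Dl: "i < length xs \<Longrightarrow> length (Dl i xs) = Suc (length xs)"
  by (simp add: Dl_def)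

lemma set_Dl: "set (Dl i xs) \<subseteq> set xs"
  by (auto simp: Dl_def dest: in_set_takeD in_set_dropD)

lemma nth_Dl: "i < length xs \<Longrightarrow> l < Suc (length xs) \<Longrightarrow>
    Dl i xs ! l = xs ! (if l \<le> i then l else l - 1)"
proof -
  assume a: "i < length xs" "l < Suc (length xs)"
  then have m: "min (Suc i) (length xs) = Suc i \<or> (length xs = Suc i)" by auto
  show ?thesis
  proof (cases "l \<le> i")
    case True then show ?thesis using a by (auto simp: Dl_def nth_append)
  next
    case False
    then have "Dl i xs ! l = drop i xs ! (l - Suc i)" using a by (auto simp: Dl_def nth_append)
    also have "\<dots> = xs ! (i + (l - Suc i))" using a False by (simp add: nth_drop)
    also have "i + (l - Suc i) = l - 1" using False by simp
    finally show ?thesis using False by simp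
  qed
qed

lemma Dl_Dl: "j \<le> i \<Longrightarrow> i < length xs \<Longrightarrow> Dl j (Dl i xs) = Dl (Suc i) (Dl j xs)"
proof (rule nth_equalityI)
  assume ji: "j \<le> i" and il: "i < length xs"
  show "length (Dl j (Dl i xs)) = length (Dl (Suc i) (Dl j xs))"
    using ji il by (simp add: length_Dl)
  fix p assume "p < length (Dl j (Dl i xs))"
  then have p: "p < Suc (Suc (length xs))" using ji il by (simp add: length_Dl)
  show "Dl j (Dl i xs) ! p = Dl (Suc i) (Dl j xs) ! p"
    using ji il p by (simp add: nth_Dl length_Dl)
qed

definition elem :: "(complex^'n::finite) set \<Rightarrow> nat \<Rightarrow> (nat \<Rightarrow> (complex^'n) \<Rightarrow> complex) \<Rightarrow> 'n tens" where
  "elem U q g = (\<lambda>xs. if length xs = q + 2 \<and> set xs \<subseteq> U then (\<Prod>i<q+2. g i (xs ! i)) else 0)"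

lemma sum_if_const: "(\<Sum>m\<in>A. if P then f m else 0) = (if P then \<Sum>m\<in>A. f m else 0)"
  by auto

lemma elem_out:
  assumes "\<not> (length xs = q + 2 \<and> set xs \<subseteq> U)" shows "elem U q g xs = 0"
  unfolding elem_def by (simp only: if_not_P[OF assms])

lemma BarSpace_iff: "F \<in> BarSpace U q \<longleftrightarrow>
   (\<exists>(N::nat) fs. (\<forall>m<N. \<forall>i<q+2. holo U (fs m i)) \<and> F = (\<lambda>xs. \<Sum>m<N. elem U q (fs m) xs))"
proof -
  have e: "(\<lambda>xs. \<Sum>m<(N::nat). elem U q (fs m) xs) = (\<lambda>xs. if length xs = q + 2 \<and> set xs \<subseteq> U
                     then (\<Sum>m<N. \<Prod>i<q+2. fs m i (xs ! i)) else 0)" for N fs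
    by (rule ext) (simp add: elem_def sum_if_const)
  show ?thesis unfolding BarSpace_def e by (simp add: fun_eq_iff)
qed

lemma sum_lessThan_add: "(\<Sum>m<(a::nat)+b. h m) = (\<Sum>m<a. h m) + (\<Sum>m<b. h (a + m))"
  by (induction b) (auto simp: add.assoc)

lemma bs_zero: "(\<lambda>xs. 0) \<in> BarSpace U q"
  unfolding BarSpace_iff by (rule exI[of _ 0]) auto

lemma bs_elem: "(\<And>i. i < q + 2 \<Longrightarrow> holo U (g i)) \<Longrightarrow> elem U q g \<in> BarSpace U q"
  unfolding BarSpace_iff by (rule exI[of _ 1], rule exI[of _ "\<lambda>_. g"]) auto

lemma elem_scale: "elem U q (\<lambda>i. if i = 0 then (\<lambda>x. c * g 0 x) else g i) xs = c * elem U q g xs"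
proof -
  have "(\<Prod>i<q+2. (if i = 0 then (\<lambda>x. c * g 0 x) else g i) (xs ! i)) = c * (\<Prod>i<q+2. g i (xs ! i))"
    by (simp only: add_2_eq_Suc' prod.lessThan_Suc_shift) simp
  then show ?thesis by (simp add: elem_def)
qed

lemma holo_cmult: "holo U f \<Longrightarrow> holo U (\<lambda>x. c * f x)"
  by (rule holo_mult[OF holo_const])

lemma bs_lin:
  assumes "F1 \<in> BarSpace U q" "F2 \<in> BarSpace U q"
  shows "(\<lambda>xs. F1 xs + c * F2 xs) \<in> BarSpace U q"
proof -
  obtain N1 :: nat and fs1 where 1: "\<forall>m<N1. \<forall>i<q+2. holo U (fs1 m i)" "F1 = (\<lambda>xs. \<Sum>m<N1. elem U q (fs1 m) xs)"
    using assms(1) unfolding BarSpace_iff by blast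
  obtain N2 :: nat and fs2 where 2: "\<forall>m<N2. \<forall>i<q+2. holo U (fs2 m i)" "F2 = (\<lambda>xs. \<Sum>m<N2. elem U q (fs2 m) xs)"
    using assms(2) unfolding BarSpace_iff by blast
  define fs where "fs m = (if m < N1 then fs1 m else (\<lambda>i. if i = 0 then (\<lambda>x. c * fs2 (m - N1) 0 x) else fs2 (m - N1) i))" for m
  have h: "\<forall>m<N1+N2. \<forall>i<q+2. holo U (fs m i)"
    using 1(1) 2(1) by (auto simp: fs_def intro: holo_cmult)
  have "(\<lambda>xs. F1 xs + c * F2 xs) = (\<lambda>xs. \<Sum>m<N1+N2. elem U q (fs m) xs)"
    unfolding sum_lessThan_add 1(2) 2(2)
    by (simp add: fs_def elem_scale sum_distrib_left)
  with h show ?thesis unfolding BarSpace_iff by blast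
qed

lemma bs_sum:
  assumes "finite A" "\<And>a. a \<in> A \<Longrightarrow> H a \<in> BarSpace U q"
  shows "(\<lambda>xs. \<Sum>a\<in>A. c a * H a xs) \<in> BarSpace U q"
  using assms
proof (induction A rule: finite_induct)
  case empty then show ?case using bs_zero by simp
next
  case (insert x F)
  have "(\<lambda>xs. (\<Sum>a\<in>F. c a * H a xs) + c x * H x xs) \<in> BarSpace U q"
    by (rule bs_lin) (use insert in auto)
  then show ?case using insert.hyps by (simp add: add.commute)
qed

lemma barD_lin: "barD U q (\<lambda>xs. F1 xs + c * F2 xs) = (\<lambda>xs. barD U q F1 xs + c * barD U q F2 xs)"
  by (simp add: barD_Dl fun_eq_iff sum.distrib sum_distrib_left algebra_simps)

lemma barD_sum: "barD U q (\<lambda>xs. \<Sum>a\<in>A. c a * H a xs) = (\<lambda>xs. \<Sum>a\<in>A. c a * barD U q (H a) xs)"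
proof (rule ext)
  fix xs show "barD U q (\<lambda>xs. \<Sum>a\<in>A. c a * H a xs) xs = (\<Sum>a\<in>A. c a * barD U q (H a) xs)"
  proof (cases "length xs = q + 1 \<and> set xs \<subseteq> U")
    case True then show ?thesis by (simp add: barD_Dl sum_distrib_left algebra_simps sum.swap[of _ A])
  next
    case False then show ?thesis by (simp add: barD_out[OF False])
  qed
qed

lemma barD_zero: "barD U q (\<lambda>xs. 0) = (\<lambda>xs. 0)"
  by (simp add: barD_def fun_eq_iff)

definition sig :: "nat \<Rightarrow> nat \<Rightarrow> nat" where "sig i l = (if l \<le> i then l else l - 1)"

definition mg :: "nat \<Rightarrow> (nat \<Rightarrow> 'a \<Rightarrow> complex) \<Rightarrow> nat \<Rightarrow> nat \<Rightarrow> 'a \<Rightarrow> complex" where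
  "mg p f i k x = (\<Prod>l\<in>{l. l < Suc (Suc p) \<and> sig i l = k}. f l x)"

lemma prod_Dl:
  assumes "length xs = Suc p" "i \<le> p"
  shows "(\<Prod>l<Suc (Suc p). f l (Dl i xs ! l)) = (\<Prod>k<Suc p. mg p f i k (xs ! k))"
proof -
  have "(\<Prod>l<Suc (Suc p). f l (Dl i xs ! l)) = (\<Prod>l<Suc (Suc p). f l (xs ! sig i l))"
    using assms by (intro prod.cong refl) (simp add: nth_Dl sig_def)
  also have "\<dots> = (\<Prod>k<Suc p. \<Prod>l\<in>{l\<in>{..<Suc (Suc p)}. sig i l = k}. f l (xs ! sig i l))"
    by (rule prod.group[symmetric]) (use assms(2) in \<open>auto simp: sig_def\<close>)
  also have "\<dots> = (\<Prod>k<Suc p. mg p f i k (xs ! k))"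
    unfolding mg_def by (intro prod.cong refl) auto
  finally show ?thesis .
qed

lemma holo_mg: "(\<And>l. l < Suc (Suc p) \<Longrightarrow> holo U (f l)) \<Longrightarrow> holo U (mg p f i k)"
  unfolding mg_def[abs_def] by (rule holo_prod) auto

lemma barD_BarSpace:
  assumes "F \<in> BarSpace U (Suc q)"
  shows "barD U (Suc q) F \<in> BarSpace U q"
proof -
  obtain N :: nat and fs where h: "\<forall>m<N. \<forall>i<Suc q+2. holo U (fs m i)"
      and F: "F = (\<lambda>xs. \<Sum>m<N. elem U (Suc q) (fs m) xs)"
    using assms unfolding BarSpace_iff by blast
  have e: "barD U (Suc q) F = (\<lambda>xs. \<Sum>i\<in>{..Suc q}. (-1)^i * (\<Sum>m\<in>{..<N}. 1 * elem U q (mg (Suc q) (fs m) i) xs))"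
  proof (rule ext)
    fix xs :: "(complex^'a) list"
    show "barD U (Suc q) F xs = (\<Sum>i\<in>{..Suc q}. (-1)^i * (\<Sum>m\<in>{..<N}. 1 * elem U q (mg (Suc q) (fs m) i) xs))"
    proof (cases "length xs = Suc q + 1 \<and> set xs \<subseteq> U")
      case True
      have "elem U (Suc q) (fs m) (Dl i xs) = elem U q (mg (Suc q) (fs m) i) xs" if "i \<le> Suc q" for i m
        using True that set_Dl[of i xs] prod_Dl[of xs "Suc q" i "fs m"]
        by (auto simp: elem_def length_Dl)
      then show ?thesis using True by (simp add: barD_Dl F)
    next
      case False
      have F': "\<not> (length xs = q + 2 \<and> set xs \<subseteq> U)" using False by auto
      show ?thesis by (simp add: barD_out[OF False] elem_out[OF F'])
    qed
  qed
  show ?thesis unfolding e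
    by (intro bs_sum bs_elem holo_mg) (use h in auto)
qed

lemma barD_barD: "barD U q (barD U (Suc q) H) = (\<lambda>xs. 0)"
proof (rule ext)
  fix xs :: "(complex^'a) list"
  show "barD U q (barD U (Suc q) H) xs = 0"
  proof (cases "length xs = q + 1 \<and> set xs \<subseteq> U")
    case False then show ?thesis by (rule barD_out)
  next
    case True
    define g where "g p = (-1::complex)^(fst p + snd p) * H (Dl (snd p) (Dl (fst p) xs))" for p
    define S where "S = {..q} \<times> {..Suc q}"
    define S1 where "S1 = {p\<in>S. snd p \<le> fst p}"
    define S2 where "S2 = {p\<in>S. fst p < snd p}"
    have inner: "barD U (Suc q) H (Dl i xs) = (\<Sum>j\<le>Suc q. (-1)^j * H (Dl j (Dl i xs)))" if "i \<le> q" for i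
    proof -
      have "length (Dl i xs) = Suc q + 1 \<and> set (Dl i xs) \<subseteq> U"
        using True that set_Dl[of i xs] by (auto simp: length_Dl)
      then show ?thesis by (simp add: barD_Dl)
    qed
    have "barD U q (barD U (Suc q) H) xs = (\<Sum>i\<le>q. (-1)^i * (\<Sum>j\<le>Suc q. (-1)^j * H (Dl j (Dl i xs))))"
      unfolding barD_in[OF True] by (intro sum.cong refl) (simp add: inner)
    also have "\<dots> = (\<Sum>i\<le>q. \<Sum>j\<le>Suc q. g (i, j))"
      unfolding sum_distrib_left by (intro sum.cong refl) (simp add: g_def power_add mult.assoc)
    also have "\<dots> = sum g S"
      unfolding S_def by (rule sum.cartesian_product'[symmetric])
    also have "\<dots> = sum g S1 + sum g S2"
    proof -
      have fin: "finite S1" "finite S2" by (auto simp: S1_def S2_def S_def)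
      have "S = S1 \<union> S2" by (auto simp: S1_def S2_def)
      moreover have "S1 \<inter> S2 = {}" by (auto simp: S1_def S2_def)
      ultimately show ?thesis using sum.union_disjoint[OF fin] by simp
    qed
    also have "sum g S1 = sum (\<lambda>p. - g p) S2"
    proof (rule sum.reindex_bij_witness[where i="\<lambda>(a, b). (b - 1, a)" and j="\<lambda>(i, j). (j, Suc i)"])
      fix a assume "a \<in> S1" then show "(case case a of (i, j) \<Rightarrow> (j, Suc i) of (a, b) \<Rightarrow> (b - 1, a)) = a"
        by (auto split: prod.splits)
    next
      fix a assume "a \<in> S1" then show "(case a of (i, j) \<Rightarrow> (j, Suc i)) \<in> S2"
        by (auto simp: S1_def S2_def S_def split: prod.splits)
    next
      fix b assume "b \<in> S2" then show "(case case b of (a, b) \<Rightarrow> (b - 1, a) of (i, j) \<Rightarrow> (j, Suc i)) = b"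
        by (auto simp: S2_def split: prod.splits)
    next
      fix b assume "b \<in> S2" then show "(case b of (a, b) \<Rightarrow> (b - 1, a)) \<in> S1"
        by (auto simp: S1_def S2_def S_def split: prod.splits)
    next
      fix a assume a: "a \<in> S1"
      obtain i j where ij: "a = (i, j)" by (cases a)
      have ji: "j \<le> i" "i < length xs" using a True by (auto simp: ij S1_def S_def)
      show "- g (case a of (i, j) \<Rightarrow> (j, Suc i)) = g a"
        unfolding ij using Dl_Dl[OF ji] by (simp add: g_def add.commute)
    qed
    also have "sum (\<lambda>p. - g p) S2 + sum g S2 = 0" by (simp add: sum_negf)
    finally show ?thesis .
  qed
qed



definition sB :: "(complex^'n::finite) set \<Rightarrow> nat \<Rightarrow> 'n tens \<Rightarrow> 'n tens" where
  "sB U q F = (\<lambda>xs. if length xs = q + 3 \<and> set xs \<subseteq> U then F (butlast xs) else 0)"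

lemma sB_BarSpace:
  assumes "F \<in> BarSpace U q" shows "sB U q F \<in> BarSpace U (Suc q)"
proof -
  obtain N :: nat and fs where h: "\<forall>m<N. \<forall>i<q+2. holo U (fs m i)"
      and F: "F = (\<lambda>xs. \<Sum>m<N. elem U q (fs m) xs)"
    using assms unfolding BarSpace_iff by blast
  define fs' where "fs' m i = (if i < q + 2 then fs m i else (\<lambda>_. 1))" for m i
  have h': "\<forall>m<N. \<forall>i<Suc q+2. holo U (fs' m i)" using h by (auto simp: fs'_def)
  have "sB U q F = (\<lambda>xs. \<Sum>m<N. elem U (Suc q) (fs' m) xs)"
  proof (rule ext)
    fix xs :: "(complex^'a) list"
    show "sB U q F xs = (\<Sum>m<N. elem U (Suc q) (fs' m) xs)"
    proof (cases "length xs = q + 3 \<and> set xs \<subseteq> U")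
      case True
      have bl: "length (butlast xs) = q + 2 \<and> set (butlast xs) \<subseteq> U"
        using True by (auto dest: in_set_butlastD)
      have "elem U q (fs m) (butlast xs) = elem U (Suc q) (fs' m) xs" for m
      proof -
        have "(\<Prod>i<q+2. fs m i (butlast xs ! i)) = (\<Prod>i<q+2. fs m i (xs ! i))"
          using True by (intro prod.cong refl) (simp add: nth_butlast)
        moreover have "(\<Prod>i<Suc q + 2. fs' m i (xs ! i)) = (\<Prod>i<q+2. fs m i (xs ! i))"
          by (simp add: fs'_def)
        ultimately show ?thesis using True bl by (simp add: elem_def)
      qed
      then show ?thesis using True by (simp add: sB_def F)
    next
      case False
      have F': "\<not> (length xs = Suc q + 2 \<and> set xs \<subseteq> U)" using False by auto
      have "sB U q F xs = 0" unfolding sB_def by (simp only: if_not_P[OF False])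
      then show ?thesis by (simp add: elem_out[OF F'])
    qed
  qed
  then show ?thesis unfolding BarSpace_iff using h' by blast
qed

lemma butlast_Dl: assumes "i < length xs - 1" shows "butlast (Dl i xs) = Dl i (butlast xs)"
proof -
  have ne: "drop i xs \<noteq> []" using assms by simp
  have "butlast (Dl i xs) = take (Suc i) xs @ butlast (drop i xs)"
    unfolding Dl_def butlast_append using ne by simp
  also have "\<dots> = take (Suc i) (butlast xs) @ drop i (butlast xs)"
    using assms by (simp add: take_butlast drop_butlast)
  finally show ?thesis by (simp add: Dl_def)
qed

lemma barD_sB:
  assumes xs: "length xs = q + 2 \<and> set xs \<subseteq> U" and F: "F \<in> BarSpace U q"
  shows "barD U (Suc q) (sB U q F) xs = barD U q F (butlast xs) + (-1)^(Suc q) * F xs"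
proof -
  have xs': "length xs = Suc q + 1 \<and> set xs \<subseteq> U" using xs by simp
  have bl: "length (butlast xs) = q + 1 \<and> set (butlast xs) \<subseteq> U"
    using xs by (auto dest: in_set_butlastD)
  have s: "sB U q F (Dl i xs) = F (butlast (Dl i xs))" if "i \<le> Suc q" for i
    using xs that set_Dl[of i xs] by (auto simp: sB_def length_Dl)
  have top: "butlast (Dl (Suc q) xs) = xs"
  proof -
    have "drop (Suc q) xs = [xs ! Suc q]" using xs Cons_nth_drop_Suc[of "Suc q" xs] by simp
    moreover have "take (Suc (Suc q)) xs = xs" using xs by simp
    ultimately show ?thesis by (simp add: Dl_def)
  qed
  have "barD U (Suc q) (sB U q F) xs = (\<Sum>i\<le>Suc q. (-1)^i * F (butlast (Dl i xs)))"
    unfolding barD_in[OF xs'] by (intro sum.cong refl) (simp add: s)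
  also have "\<dots> = (\<Sum>i\<le>q. (-1)^i * F (Dl i (butlast xs))) + (-1)^(Suc q) * F xs"
    using xs by (simp add: top butlast_Dl)
  also have "\<dots> = barD U q F (butlast xs) + (-1)^(Suc q) * F xs"
    unfolding barD_in[OF bl] ..
  finally show ?thesis .
qed

lemma prod_ends:
  fixes f :: "nat \<Rightarrow> 'a \<Rightarrow> complex"
  assumes "\<And>k. 0 < k \<Longrightarrow> k < Suc (Suc n) \<Longrightarrow> M ! k = L ! k" "M ! 0 = z" "M ! Suc (Suc n) = \<zeta>"
  shows "(\<Prod>k<Suc (Suc (Suc n)). f k (M ! k)) =
      f 0 z * f (Suc (Suc n)) \<zeta> * (\<Prod>k<Suc (Suc (Suc n)). (if k = 0 \<or> k = Suc (Suc n) then (\<lambda>_. 1) else f k) (L ! k))"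
proof -
  have mid: "(\<Prod>k<Suc n. f (Suc k) (M ! Suc k)) = (\<Prod>k<Suc n. (if Suc k = Suc (Suc n) then (\<lambda>_. 1) else f (Suc k)) (L ! Suc k))"
    using assms(1) by (intro prod.cong refl) auto
  have A: "(\<Prod>k<Suc (Suc (Suc n)). h k) = h 0 * (\<Prod>k<Suc n. h (Suc k)) * h (Suc (Suc n))"
    for h :: "nat \<Rightarrow> complex"
  proof -
    have "(\<Prod>k<Suc (Suc (Suc n)). h k) = (\<Prod>k<Suc (Suc n). h k) * h (Suc (Suc n))"
      by (rule prod.lessThan_Suc)
    also have "(\<Prod>k<Suc (Suc n). h k) = h 0 * (\<Prod>k<Suc n. h (Suc k))"
      by (rule prod.lessThan_Suc_shift)
    finally show ?thesis .
  qed
  show ?thesis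
    unfolding A using mid assms(2,3) by (simp del: prod.lessThan_Suc add: mult_ac)
qed

definition Em :: "(complex^'n::finite) set \<Rightarrow> nat \<Rightarrow> (nat \<Rightarrow> (complex^'n) \<Rightarrow> complex) \<Rightarrow> 'n tens" where
  "Em U q f = elem U (Suc q) (\<lambda>i. if i = 0 \<or> i = q + 2 then (\<lambda>_. 1) else f i)"

lemma barD_G:
  assumes F: "F = (\<lambda>xs. \<Sum>m<N. elem U (Suc q) (fs m) xs)" and z: "z \<in> U" and \<zeta>: "\<zeta> \<in> U"
  shows "barD U (Suc q) (\<lambda>xs. F (z # take (Suc q) (tl xs) @ [\<zeta>])) =
    (\<lambda>xs. \<Sum>m\<in>{..<N}. (fs m 0 z * fs m (q+2) \<zeta>) * barD U (Suc q) (Em U q (fs m)) xs)"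
proof -
  have "barD U (Suc q) (\<lambda>xs. F (z # take (Suc q) (tl xs) @ [\<zeta>])) =
        barD U (Suc q) (\<lambda>xs. \<Sum>m\<in>{..<N}. (fs m 0 z * fs m (q+2) \<zeta>) * Em U q (fs m) xs)"
  proof (rule ext)
    fix xs :: "(complex^'a) list"
    show "barD U (Suc q) (\<lambda>xs. F (z # take (Suc q) (tl xs) @ [\<zeta>])) xs =
        barD U (Suc q) (\<lambda>xs. \<Sum>m\<in>{..<N}. (fs m 0 z * fs m (q+2) \<zeta>) * Em U q (fs m) xs) xs"
    proof (cases "length xs = Suc q + 1 \<and> set xs \<subseteq> U")
      case False then show ?thesis by (simp add: barD_out[OF False])
    next
      case True
      have trm: "F (z # take (Suc q) (tl L) @ [\<zeta>]) = (\<Sum>m\<in>{..<N}. (fs m 0 z * fs m (q+2) \<zeta>) * Em U q (fs m) L)"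
        if L: "length L = q + 3" "set L \<subseteq> U" for L
      proof -
        define M where "M = z # take (Suc q) (tl L) @ [\<zeta>]"
        have lM: "length M = q + 3" using L by (simp add: M_def)
        have sM: "set M \<subseteq> U" using L z \<zeta> by (auto simp: M_def dest!: in_set_takeD list.set_sel(2)[rotated])
        have eq: "(\<Prod>k<Suc q + 2. fs m k (M ! k)) = fs m 0 z * fs m (q+2) \<zeta> *
            (\<Prod>k<Suc q + 2. (if k = 0 \<or> k = q + 2 then (\<lambda>_. 1) else fs m k) (L ! k))" for m
        proof -
          have "(\<Prod>k<Suc (Suc (Suc q)). fs m k (M ! k)) = fs m 0 z * fs m (Suc (Suc q)) \<zeta> *
            (\<Prod>k<Suc (Suc (Suc q)). (if k = 0 \<or> k = Suc (Suc q) then (\<lambda>_. 1) else fs m k) (L ! k))"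
          proof (rule prod_ends)
            fix k assume k: "0 < k" "k < Suc (Suc q)"
            then obtain k' where k': "k = Suc k'" by (cases k) auto
            show "M ! k = L ! k" using k k' L by (simp add: M_def nth_append nth_tl)
          next
            show "M ! 0 = z" by (simp add: M_def)
            show "M ! Suc (Suc q) = \<zeta>" using L by (simp add: M_def nth_append)
          qed
          then show ?thesis by (simp add: numeral_2_eq_2)
        qed
        have e1: "elem U (Suc q) (fs m) M = (\<Prod>k<Suc q + 2. fs m k (M ! k))" for m
          unfolding elem_def by (rule if_P) (use lM sM in simp)
        have e2: "Em U q (fs m) L = (\<Prod>k<Suc q + 2. (if k = 0 \<or> k = q + 2 then (\<lambda>_. 1) else fs m k) (L ! k))" for m
          unfolding Em_def elem_def by (rule if_P) (use L in simp)
        show ?thesis unfolding M_def[symmetric] F by (simp only: e1 e2 eq)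
      qed
      have "barD U (Suc q) (\<lambda>xs. F (z # take (Suc q) (tl xs) @ [\<zeta>])) xs =
          (\<Sum>i\<le>Suc q. (-1)^i * F (z # take (Suc q) (tl (Dl i xs)) @ [\<zeta>]))"
        by (rule barD_in[OF True])
      also have "\<dots> = (\<Sum>i\<le>Suc q. (-1)^i * (\<Sum>m\<in>{..<N}. (fs m 0 z * fs m (q+2) \<zeta>) * Em U q (fs m) (Dl i xs)))"
        using True by (intro sum.cong refl) (subst trm, auto simp: length_Dl dest!: set_Dl[THEN subsetD])
      also have "\<dots> = barD U (Suc q) (\<lambda>xs. \<Sum>m\<in>{..<N}. (fs m 0 z * fs m (q+2) \<zeta>) * Em U q (fs m) xs) xs"
        by (rule barD_in[OF True, symmetric])
      finally show ?thesis .
    qed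
  qed
  then show ?thesis by (simp add: barD_sum)
qed

lemma list_ends:
  assumes "length K = Suc (Suc (Suc n))"
  shows "K = K ! 0 # take (Suc n) (tl K) @ [K ! Suc (Suc n)]"
proof (rule nth_equalityI)
  show "length K = length (K ! 0 # take (Suc n) (tl K) @ [K ! Suc (Suc n)])" using assms by simp
  fix p assume "p < length K"
  then have p: "p < Suc (Suc (Suc n))" using assms by simp
  show "K ! p = (K ! 0 # take (Suc n) (tl K) @ [K ! Suc (Suc n)]) ! p"
  proof (cases p)
    case 0 then show ?thesis by simp
  next
    case (Suc p')
    then show ?thesis using p assms
      by (cases "p' < Suc n") (auto simp: nth_append nth_tl less_Suc_eq)
  qed
qed

lemma barD_G_local:
  assumes z: "z \<in> U" and \<zeta>: "\<zeta> \<in> U"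
  shows "barD U (Suc q) (\<lambda>xs. F (z # take (Suc q) (tl xs) @ [\<zeta>])) (z # mid @ [\<zeta>]) = barD U (Suc q) F (z # mid @ [\<zeta>])"
proof (cases "length (z # mid @ [\<zeta>]) = Suc q + 1 \<and> set (z # mid @ [\<zeta>]) \<subseteq> U")
  case False then show ?thesis by (simp add: barD_out[OF False])
next
  case True
  define L where "L = z # mid @ [\<zeta>]"
  have lL: "length L = Suc (Suc q)" using True by (simp add: L_def)
  have eqD: "Dl i L = z # take (Suc q) (tl (Dl i L)) @ [\<zeta>]" if i: "i \<le> Suc q" for i
  proof -
    have len: "length (Dl i L) = Suc (Suc (Suc q))" using lL i by (simp add: length_Dl)
    have "Dl i L ! 0 = z" using lL i by (simp add: nth_Dl L_def)
    moreover have "Dl i L ! Suc (Suc q) = \<zeta>" using lL i by (simp add: nth_Dl L_def nth_append)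
    ultimately show ?thesis using list_ends[OF len] by simp
  qed
  have True': "length L = Suc q + 1 \<and> set L \<subseteq> U" using True by (simp add: L_def)
  show ?thesis
    unfolding L_def[symmetric] barD_in[OF True']
    by (intro sum.cong refl) (simp add: eqD[symmetric])
qed



lemma Phi_out: "\<not> (z \<in> U \<and> \<zeta> \<in> U) \<Longrightarrow> Phi U q F I z \<zeta> = 0"
  by (cases q) auto

lemma Phi_local:
  assumes "\<And>mid. H (z # mid @ [\<zeta>]) = H' (z # mid @ [\<zeta>])"
  shows "Phi U q H I z \<zeta> = Phi U q H' I z \<zeta>"
proof (cases q)
  case 0 then show ?thesis using assms[of "[]"] by simp
next
  case (Suc q')
  have "(\<lambda>xs. H (z # take (Suc q') (tl xs) @ [\<zeta>])) = (\<lambda>xs. H' (z # take (Suc q') (tl xs) @ [\<zeta>]))"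
    using assms by auto
  then show ?thesis using Suc by simp
qed

lemma Phi_zero: "Phi U q (\<lambda>xs. 0) = (\<lambda>I z \<zeta>. 0)"
proof (induction q)
  case 0 show ?case by (auto simp: fun_eq_iff)
next
  case (Suc q)
  have z0: "barD U (Suc q) (\<lambda>xs. 0) = (\<lambda>xs. 0)" by (rule barD_zero)
  show ?case by (simp only: Phi.simps z0 Suc.IH Pop_zero) simp
qed

lemma Phi_sum_lin:
  assumes K: "\<forall>F\<in>BarSpace U q. Phi U q F \<in> Kos U q"
    and L: "\<forall>F1\<in>BarSpace U q. \<forall>F2\<in>BarSpace U q. \<forall>c. Phi U q (\<lambda>xs. F1 xs + c * F2 xs) =
              (\<lambda>I z \<zeta>. Phi U q F1 I z \<zeta> + c * Phi U q F2 I z \<zeta>)"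
    and H: "\<forall>m<(N::nat). H m \<in> BarSpace U q"
  shows "Phi U q (\<lambda>xs. \<Sum>m\<in>{..<N}. c m * H m xs) = (\<lambda>I z \<zeta>. \<Sum>m\<in>{..<N}. c m * Phi U q (H m) I z \<zeta>)"
  using H
proof (induction N)
  case 0 then show ?case by (simp add: Phi_zero)
next
  case (Suc N)
  have B: "(\<lambda>xs. \<Sum>m\<in>{..<N}. c m * H m xs) \<in> BarSpace U q"
    by (rule bs_sum) (use Suc.prems in auto)
  have "Phi U q (\<lambda>xs. (\<Sum>m\<in>{..<N}. c m * H m xs) + c N * H N xs) =
      (\<lambda>I z \<zeta>. Phi U q (\<lambda>xs. \<Sum>m\<in>{..<N}. c m * H m xs) I z \<zeta> + c N * Phi U q (H N) I z \<zeta>)"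
    using L B Suc.prems by auto
  then show ?case using Suc by simp
qed

lemma Em_BarSpace:
  assumes "\<forall>i<Suc q+2. holo U (fs i)" shows "Em U q fs \<in> BarSpace U (Suc q)"
  unfolding Em_def by (rule bs_elem) (use assms in auto)

lemma Phi_Suc:
  "Phi U (Suc q) F I z \<zeta> = (if Suc q \<le> CARD('n) \<and> z \<in> U \<and> \<zeta> \<in> U then
      Pop U (Phi U q (barD U (Suc q) (\<lambda>xs. F (z # take (Suc q) (tl xs) @ [\<zeta>])))) I z \<zeta> else 0)"
  for U :: "(complex^'n::{finite,linorder}) set"
  by simp

lemma Phi_main:
  fixes U :: "(complex^'n::{finite,linorder}) set"
  assumes U: "open U" "convex U"
  shows "(\<forall>F\<in>BarSpace U q. Phi U q F \<in> Kos U q) \<and>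
    (\<forall>F1\<in>BarSpace U q. \<forall>F2\<in>BarSpace U q. \<forall>c. Phi U q (\<lambda>xs. F1 xs + c * F2 xs) =
              (\<lambda>I z \<zeta>. Phi U q F1 I z \<zeta> + c * Phi U q F2 I z \<zeta>))"
proof (induction q)
  case 0
  have K: "Phi U 0 F \<in> Kos U 0" if F: "F \<in> BarSpace U 0" for F
  proof -
    obtain N :: nat and fs where h: "\<forall>m<N. \<forall>i<0+2. holo U (fs m i)"
        and FF: "F = (\<lambda>xs. \<Sum>m<N. elem U 0 (fs m) xs)"
      using F unfolding BarSpace_iff by blast
    show ?thesis
    proof (rule KosI)
      fix I :: "'n set" assume "card I \<noteq> 0"
      then have "I \<noteq> {}" by auto
      then show "Phi U 0 F I = (\<lambda>z \<zeta>. 0)" by auto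
    next
      fix I :: "'n set" and z \<zeta> assume "z \<notin> U \<or> \<zeta> \<notin> U"
      then show "Phi U 0 F I z \<zeta> = 0" by auto
    next
      fix I :: "'n set"
      have UU: "open (U \<times> U)" using U by (simp add: open_Times)
      have "holoP (U \<times> U) (\<lambda>p. if I = {} then \<Sum>m<N. fs m 0 (fst p) * fs m 1 (snd p) else 0)"
        by (cases "I = {}") (auto intro!: holoP_sum holoP_mult holoP_fst holoP_snd simp: h)
      then show "holoP (U \<times> U) (unc (Phi U 0 F I))"
        by (rule holoP_transform[OF _ UU])
           (auto simp: unc_def FF elem_def mem_Times_iff numeral_2_eq_2 lessThan_Suc mult_ac)
    qed
  qed
  show ?case using K by (auto simp: fun_eq_iff)
next
  case (Suc q)
  have KS: "\<forall>F\<in>BarSpace U q. Phi U q F \<in> Kos U q" and LS: "\<forall>F1\<in>BarSpace U q. \<forall>F2\<in>BarSpace U q. \<forall>c.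
       Phi U q (\<lambda>xs. F1 xs + c * F2 xs) = (\<lambda>I z \<zeta>. Phi U q F1 I z \<zeta> + c * Phi U q F2 I z \<zeta>)"
    using Suc.IH by blast+
  have dec: "barD U (Suc q) (\<lambda>xs. F (z # take (Suc q) (tl xs) @ [\<zeta>])) \<in> BarSpace U q \<and>
      Phi U (Suc q) F J z \<zeta> = (\<Sum>m\<in>{..<N}. (fs m 0 z * fs m (q+2) \<zeta>) *
           Pop U (Phi U q (barD U (Suc q) (Em U q (fs m)))) J z \<zeta>)"
    if F: "F = (\<lambda>xs. \<Sum>m<N. elem U (Suc q) (fs m) xs)" and h: "\<forall>m<N. \<forall>i<Suc q+2. holo U (fs m i)"
      and z: "z \<in> U" and \<zeta>: "\<zeta> \<in> U" and n: "Suc q \<le> CARD('n)" for F and N :: nat and fs z \<zeta> J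
  proof -
    have hE: "\<forall>m<N. \<forall>i<Suc q+2. holo U ((\<lambda>i. if i = 0 \<or> i = q + 2 then (\<lambda>_. 1) else fs m i) i)"
      using h by auto
    have EB: "\<forall>m<N. barD U (Suc q) (Em U q (fs m)) \<in> BarSpace U q"
      using h by (auto intro!: barD_BarSpace Em_BarSpace)
    have bG: "barD U (Suc q) (\<lambda>xs. F (z # take (Suc q) (tl xs) @ [\<zeta>])) =
        (\<lambda>xs. \<Sum>m\<in>{..<N}. (fs m 0 z * fs m (q+2) \<zeta>) * barD U (Suc q) (Em U q (fs m)) xs)"
      by (rule barD_G[OF F z \<zeta>])
    have B: "barD U (Suc q) (\<lambda>xs. F (z # take (Suc q) (tl xs) @ [\<zeta>])) \<in> BarSpace U q"
      unfolding bG by (rule bs_sum) (use EB in auto)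
    have P1: "Phi U q (barD U (Suc q) (\<lambda>xs. F (z # take (Suc q) (tl xs) @ [\<zeta>]))) =
        (\<lambda>I z' \<zeta>'. \<Sum>m\<in>{..<N}. (fs m 0 z * fs m (q+2) \<zeta>) * Phi U q (barD U (Suc q) (Em U q (fs m))) I z' \<zeta>')"
      unfolding bG by (rule Phi_sum_lin[OF KS LS]) (use EB in auto)
    have P2: "Pop U (\<lambda>I z' \<zeta>'. \<Sum>m\<in>{..<N}. (fs m 0 z * fs m (q+2) \<zeta>) * Phi U q (barD U (Suc q) (Em U q (fs m))) I z' \<zeta>') =
        (\<lambda>J z' \<zeta>'. \<Sum>m\<in>{..<N}. (fs m 0 z * fs m (q+2) \<zeta>) * Pop U (Phi U q (barD U (Suc q) (Em U q (fs m)))) J z' \<zeta>')"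
      by (rule Pop_sum[OF U]) (use EB KS in auto)
    have c: "Suc q \<le> CARD('n) \<and> z \<in> U \<and> \<zeta> \<in> U" using z \<zeta> n by simp
    have "Phi U (Suc q) F J z \<zeta> = (\<Sum>m\<in>{..<N}. (fs m 0 z * fs m (q+2) \<zeta>) *
           Pop U (Phi U q (barD U (Suc q) (Em U q (fs m)))) J z \<zeta>)"
      by (simp only: Phi_Suc if_P[OF c] P1 P2)
    then show ?thesis by (rule conjI[OF B])
  qed
  have K: "Phi U (Suc q) F \<in> Kos U (Suc q)" if F: "F \<in> BarSpace U (Suc q)" for F
  proof (cases "Suc q \<le> CARD('n)")
    case False
    then have "Phi U (Suc q) F = (\<lambda>I z \<zeta>. 0)" by (simp add: fun_eq_iff)
    then show ?thesis using Kos_zero by simp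
  next
    case n: True
    obtain N :: nat and fs where h: "\<forall>m<N. \<forall>i<Suc q+2. holo U (fs m i)"
        and FF: "F = (\<lambda>xs. \<Sum>m<N. elem U (Suc q) (fs m) xs)"
      using F unfolding BarSpace_iff by blast
    define Y where "Y m = Pop U (Phi U q (barD U (Suc q) (Em U q (fs m))))" for m
    have YK: "Y m \<in> Kos U (Suc q)" if "m < N" for m
    proof -
      have "Em U q (fs m) \<in> BarSpace U (Suc q)" using h that by (intro Em_BarSpace) auto
      then show ?thesis unfolding Y_def
        by (intro Pop_Kos[OF U]) (use KS barD_BarSpace in blast)
    qed
    have eq: "Phi U (Suc q) F J z \<zeta> = (\<Sum>m\<in>{..<N}. (fs m 0 z * fs m (q+2) \<zeta>) * Y m J z \<zeta>)"
      if "z \<in> U" "\<zeta> \<in> U" for J z \<zeta>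
      using dec[OF FF h that n] by (simp add: Y_def)
    show ?thesis
    proof (rule KosI)
      fix J :: "'n set" assume J: "card J \<noteq> Suc q"
      show "Phi U (Suc q) F J = (\<lambda>z \<zeta>. 0)"
      proof (intro ext)
        fix z \<zeta> show "Phi U (Suc q) F J z \<zeta> = 0"
        proof (cases "z \<in> U \<and> \<zeta> \<in> U")
          case True then show ?thesis using eq KosD(1)[OF YK J] by (auto intro!: sum.neutral)
        next
          case False then show ?thesis by (rule Phi_out)
        qed
      qed
    next
      fix J :: "'n set" and z \<zeta> assume "z \<notin> U \<or> \<zeta> \<notin> U"
      then show "Phi U (Suc q) F J z \<zeta> = 0" using Phi_out by blast
    next
      fix J :: "'n set"
      have UU: "open (U \<times> U)" using U by (simp add: open_Times)
      have "holoP (U \<times> U) (\<lambda>p. \<Sum>m\<in>{..<N}. (fs m 0 (fst p) * fs m (q+2) (snd p)) * unc (Y m J) p)"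
        using h by (intro holoP_sum holoP_mult holoP_fst holoP_snd KosD(3)[OF YK]) auto
      then show "holoP (U \<times> U) (unc (Phi U (Suc q) F J))"
      proof (rule holoP_transform[OF _ UU])
        fix p assume p: "p \<in> U \<times> U"
        then have "Phi U (Suc q) F J (fst p) (snd p) = (\<Sum>m\<in>{..<N}. (fs m 0 (fst p) * fs m (q+2) (snd p)) * Y m J (fst p) (snd p))"
          by (intro eq) (auto simp: mem_Times_iff)
        then show "(\<Sum>m\<in>{..<N}. (fs m 0 (fst p) * fs m (q+2) (snd p)) * unc (Y m J) p) = unc (Phi U (Suc q) F J) p"
          by (simp only: unc_def)
      qed
    qed
  qed
  have L: "Phi U (Suc q) (\<lambda>xs. F1 xs + c * F2 xs) = (\<lambda>I z \<zeta>. Phi U (Suc q) F1 I z \<zeta> + c * Phi U (Suc q) F2 I z \<zeta>)"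
    if F1: "F1 \<in> BarSpace U (Suc q)" and F2: "F2 \<in> BarSpace U (Suc q)" for F1 F2 c
  proof (intro ext)
    fix I z \<zeta>
    show "Phi U (Suc q) (\<lambda>xs. F1 xs + c * F2 xs) I z \<zeta> = Phi U (Suc q) F1 I z \<zeta> + c * Phi U (Suc q) F2 I z \<zeta>"
    proof (cases "Suc q \<le> CARD('n) \<and> z \<in> U \<and> \<zeta> \<in> U")
      case False then show ?thesis by (simp only: Phi_Suc if_not_P[OF False]) simp
    next
      case True
      obtain N1 :: nat and fs1 where h1: "\<forall>m<N1. \<forall>i<Suc q+2. holo U (fs1 m i)"
          and FF1: "F1 = (\<lambda>xs. \<Sum>m<N1. elem U (Suc q) (fs1 m) xs)"
        using F1 unfolding BarSpace_iff by blast
      obtain N2 :: nat and fs2 where h2: "\<forall>m<N2. \<forall>i<Suc q+2. holo U (fs2 m i)"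
          and FF2: "F2 = (\<lambda>xs. \<Sum>m<N2. elem U (Suc q) (fs2 m) xs)"
        using F2 unfolding BarSpace_iff by blast
      define G1 where "G1 = barD U (Suc q) (\<lambda>xs. F1 (z # take (Suc q) (tl xs) @ [\<zeta>]))"
      define G2 where "G2 = barD U (Suc q) (\<lambda>xs. F2 (z # take (Suc q) (tl xs) @ [\<zeta>]))"
      have B1: "G1 \<in> BarSpace U q" using dec[OF FF1 h1] True by (simp add: G1_def)
      have B2: "G2 \<in> BarSpace U q" using dec[OF FF2 h2] True by (simp add: G2_def)
      have bl: "barD U (Suc q) (\<lambda>xs. F1 (z # take (Suc q) (tl xs) @ [\<zeta>]) + c * F2 (z # take (Suc q) (tl xs) @ [\<zeta>]))
          = (\<lambda>xs. G1 xs + c * G2 xs)"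
        unfolding G1_def G2_def by (rule barD_lin)
      have "Phi U q (\<lambda>xs. G1 xs + c * G2 xs) = (\<lambda>I z \<zeta>. Phi U q G1 I z \<zeta> + c * Phi U q G2 I z \<zeta>)"
        using LS B1 B2 by blast
      moreover have "Pop U (\<lambda>I z \<zeta>. Phi U q G1 I z \<zeta> + c * Phi U q G2 I z \<zeta>) =
          (\<lambda>J z \<zeta>. Pop U (Phi U q G1) J z \<zeta> + c * Pop U (Phi U q G2) J z \<zeta>)"
        by (rule Pop_lin[OF U]) (use KS B1 B2 in auto)
      ultimately show ?thesis using True
        by (simp only: Phi_Suc if_P[OF True] bl G1_def[symmetric] G2_def[symmetric] simp_thms if_True)
    qed
  qed
  show ?case using K L by blast
qed



lemma G_BarSpace:
  assumes F: "F \<in> BarSpace U (Suc q)" and z: "z \<in> U" and \<zeta>: "\<zeta> \<in> U"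
  shows "barD U (Suc q) (\<lambda>xs. F (z # take (Suc q) (tl xs) @ [\<zeta>])) \<in> BarSpace U q"
proof -
  obtain N :: nat and fs where h: "\<forall>m<N. \<forall>i<Suc q+2. holo U (fs m i)"
      and FF: "F = (\<lambda>xs. \<Sum>m<N. elem U (Suc q) (fs m) xs)"
    using F unfolding BarSpace_iff by blast
  have EB: "\<forall>m<N. barD U (Suc q) (Em U q (fs m)) \<in> BarSpace U q"
    using h by (auto intro!: barD_BarSpace Em_BarSpace)
  show ?thesis unfolding barD_G[OF FF z \<zeta>] by (rule bs_sum) (use EB in auto)
qed

lemma Kos_top:
  fixes U :: "(complex^'n::{finite,linorder}) set"
  assumes "\<omega> \<in> Kos U (Suc CARD('n))"
  shows "\<omega> J = (\<lambda>z \<zeta>. 0)"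
proof -
  have "card J \<le> CARD('n)" by (rule card_mono) auto
  then show ?thesis using KosD(1)[OF assms] by simp
qed

lemma chain_step:
  fixes U :: "(complex^'n::{finite,linorder}) set"
  assumes U: "open U" "convex U" and F: "F \<in> BarSpace U (Suc q)"
    and HYP: "\<And>q'. q = Suc q' \<Longrightarrow> \<forall>H\<in>BarSpace U (Suc q'). dK U (Phi U (Suc q') H) = Phi U q' (barD U (Suc q') H)"
  shows "dK U (Phi U (Suc q) F) = Phi U q (barD U (Suc q) F)"
proof (intro ext)
  fix I z \<zeta>
  have KS: "\<And>H. H \<in> BarSpace U q \<Longrightarrow> Phi U q H \<in> Kos U q" using Phi_main[OF U] by blast
  have FB: "barD U (Suc q) F \<in> BarSpace U q" by (rule barD_BarSpace[OF F])
  show "dK U (Phi U (Suc q) F) I z \<zeta> = Phi U q (barD U (Suc q) F) I z \<zeta>"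
  proof (cases "z \<in> U \<and> \<zeta> \<in> U")
    case False then show ?thesis by (auto simp: dK_def Phi_out)
  next
    case zz: True
    show ?thesis
    proof (cases "Suc q \<le> CARD('n)")
      case n: True
      define G where "G = barD U (Suc q) (\<lambda>xs. F (z # take (Suc q) (tl xs) @ [\<zeta>]))"
      have GB: "G \<in> BarSpace U q" unfolding G_def by (rule G_BarSpace[OF F]) (use zz in auto)
      define X where "X = Phi U q G"
      have XK: "X \<in> Kos U q" unfolding X_def by (rule KS[OF GB])
      have c: "Suc q \<le> CARD('n) \<and> z \<in> U \<and> \<zeta> \<in> U" using n zz by simp
      have "dK U (Phi U (Suc q) F) I z \<zeta> = dK U (Pop U X) I z \<zeta>"
        unfolding dK_def X_def G_def by (simp only: Phi_Suc if_P[OF c])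
      also have "\<dots> = X I z \<zeta> - (if q = 0 then X I \<zeta> \<zeta> else 0) - Pop U (dK U X) I z \<zeta>"
        using homotopy[OF U XK, of z \<zeta> I] zz by (simp add: algebra_simps)
      also have "Pop U (dK U X) I z \<zeta> = 0"
      proof (cases q)
        case 0 then show ?thesis using dK_Kos0[of X U] XK by (simp add: Pop_zero)
      next
        case (Suc q')
        have "dK U X = Phi U q' (barD U (Suc q') G)"
          unfolding X_def using HYP[OF Suc] GB Suc by blast
        also have "barD U (Suc q') G = (\<lambda>xs. 0)" unfolding G_def Suc by (rule barD_barD)
        finally have "dK U X = (\<lambda>I z \<zeta>. 0)" by (simp add: Phi_zero)
        then show ?thesis by (simp add: Pop_zero)
      qed
      also have "(if q = 0 then X I \<zeta> \<zeta> else 0) = 0"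
      proof (cases "q = 0")
        case True
        have "G [\<zeta>, \<zeta>] = 0"
          unfolding G_def True using zz by (simp add: barD_def)
        then show ?thesis using True by (simp add: X_def)
      qed simp
      also have "X I z \<zeta> = Phi U q (barD U (Suc q) F) I z \<zeta>"
        unfolding X_def G_def
        by (rule Phi_local) (rule barD_G_local, use zz in auto)
      finally show ?thesis by simp
    next
      case n: False
      have "Phi U (Suc q) F = (\<lambda>I z \<zeta>. 0)" using n by (simp add: fun_eq_iff)
      then have L: "dK U (Phi U (Suc q) F) I z \<zeta> = 0" by (simp add: dK_zero)
      have "Phi U q (barD U (Suc q) F) I z \<zeta> = 0"
      proof (cases "q = CARD('n)")
        case False
        then obtain q' where q': "q = Suc q'" "\<not> Suc q' \<le> CARD('n)" using n
          by (cases q) auto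
        then show ?thesis by simp
      next
        case True
        define Y where "Y = Phi U q (barD U (Suc q) F)"
        have YK: "Y \<in> Kos U q" unfolding Y_def by (rule KS[OF FB])
        have q0: "q \<noteq> 0" using True by simp
        then obtain q' where q': "q = Suc q'" by (cases q) auto
        have PK: "Pop U Y \<in> Kos U (Suc CARD('n))" using Pop_Kos[OF U YK] True by simp
        have "dK U (Pop U Y) I z \<zeta> = 0"
          by (simp add: dK_def Kos_top[OF PK])
        moreover have "Pop U (dK U Y) I z \<zeta> = 0"
        proof -
          have "dK U Y = Phi U q' (barD U (Suc q') (barD U (Suc q) F))"
            unfolding Y_def using HYP[OF q'(1)] FB q' by blast
          also have "barD U (Suc q') (barD U (Suc q) F) = (\<lambda>xs. 0)" unfolding q'(1) by (rule barD_barD)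
          finally have "dK U Y = (\<lambda>I z \<zeta>. 0)" by (simp add: Phi_zero)
          then show ?thesis by (simp add: Pop_zero)
        qed
        ultimately show ?thesis
          using homotopy[OF U YK, of z \<zeta> I] zz q0 by (simp add: Y_def)
      qed
      with L show ?thesis by simp
    qed
  qed
qed

lemma Phi_chain:
  fixes U :: "(complex^'n::{finite,linorder}) set"
  assumes U: "open U" "convex U"
  shows "\<forall>F\<in>BarSpace U (Suc q). dK U (Phi U (Suc q) F) = Phi U q (barD U (Suc q) F)"
proof (induction q)
  case 0
  show ?case
  proof
    fix F assume F: "F \<in> BarSpace U (Suc 0)"
    show "dK U (Phi U (Suc 0) F) = Phi U 0 (barD U (Suc 0) F)"
      by (rule chain_step[OF U F]) simp
  qed
next
  case (Suc q)
  show ?case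
  proof
    fix F assume F: "F \<in> BarSpace U (Suc (Suc q))"
    show "dK U (Phi U (Suc (Suc q)) F) = Phi U (Suc q) (barD U (Suc (Suc q)) F)"
    proof (rule chain_step[OF U F])
      fix q' assume "Suc q = Suc q'"
      then have e: "q' = q" by simp
      show "\<forall>H\<in>BarSpace U (Suc q'). dK U (Phi U (Suc q') H) = Phi U q' (barD U (Suc q') H)"
        unfolding e by (rule Suc.IH)
    qed
  qed
qed



theorem lemma3p3:
  fixes U :: "(complex ^ 'n::{finite,linorder}) set"
  assumes "open U" and "convex U"
  shows "(\<forall>q F. F \<in> BarSpace U q \<longrightarrow> Phi U q F \<in> Kos U q)
    \<and> (\<forall>q F. 1 \<le> q \<longrightarrow> F \<in> BarSpace U q \<longrightarrow>
          dK U (Phi U q F) = Phi U (q - 1) (barD U q F))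
    \<and> (\<forall>F z. F \<in> BarSpace U 0 \<longrightarrow> z \<in> U \<longrightarrow> Phi U 0 F {} z z = F [z, z])
    \<and> (\<forall>q F. F \<in> BarSpace U q \<longrightarrow> (q = 0 \<or> barD U q F = (\<lambda>_. 0)) \<longrightarrow>
          (\<exists>\<omega>\<in>Kos U (q + 1). Phi U q F = dK U \<omega>) \<longrightarrow>
          (\<exists>G\<in>BarSpace U (q + 1). F = barD U (q + 1) G))
    \<and> (\<forall>q \<omega>. \<omega> \<in> Kos U q \<longrightarrow> (q = 0 \<or> dK U \<omega> = (\<lambda>_ _ _. 0)) \<longrightarrow>
          (\<exists>F\<in>BarSpace U q. (q = 0 \<or> barD U q F = (\<lambda>_. 0)) \<and>
             (\<exists>\<eta>\<in>Kos U (q + 1). \<omega> = (\<lambda>I z \<zeta>. Phi U q F I z \<zeta> + dK U \<eta> I z \<zeta>))))"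
proof -
  note U = assms
  have I1: "\<forall>q F. F \<in> BarSpace U q \<longrightarrow> Phi U q F \<in> Kos U q"
    using Phi_main[OF U] by blast
  have I2: "\<forall>q F. 1 \<le> q \<longrightarrow> F \<in> BarSpace U q \<longrightarrow>
          dK U (Phi U q F) = Phi U (q - 1) (barD U q F)"
  proof (intro allI impI)
    fix q F assume q: "1 \<le> q" and F: "F \<in> BarSpace U q"
    then obtain q' where q': "q = Suc q'" by (cases q) auto
    show "dK U (Phi U q F) = Phi U (q - 1) (barD U q F)"
      using Phi_chain[OF U, of q'] F q' by simp
  qed
  have I3: "\<forall>F z. F \<in> BarSpace U 0 \<longrightarrow> z \<in> U \<longrightarrow> Phi U 0 F {} z z = F [z, z]"
    by simp
  have I4: "\<forall>q F. F \<in> BarSpace U q \<longrightarrow> (q = 0 \<or> barD U q F = (\<lambda>_. 0)) \<longrightarrow>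
          (\<exists>\<omega>\<in>Kos U (q + 1). Phi U q F = dK U \<omega>) \<longrightarrow>
          (\<exists>G\<in>BarSpace U (q + 1). F = barD U (q + 1) G)"
  proof (intro allI impI)
    fix q F assume F: "F \<in> BarSpace U q" and h: "q = 0 \<or> barD U q F = (\<lambda>_. 0)"
      and ex: "\<exists>\<omega>\<in>Kos U (q + 1). Phi U q F = dK U \<omega>"
    have bz: "barD U q F = (\<lambda>_. 0)"
    proof (cases "q = 0")
      case False then show ?thesis using h by simp
    next
      case True
      obtain \<omega> where \<omega>: "\<omega> \<in> Kos U (q + 1)" "Phi U q F = dK U \<omega>" using ex by blast
      show ?thesis
      proof (rule ext)
        fix xs
        show "barD U q F xs = 0"
        proof (cases "length xs = q + 1 \<and> set xs \<subseteq> U")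
          case False then show ?thesis by (rule barD_out)
        next
          case c: True
          then obtain x where x: "xs = [x]" "x \<in> U" using True by (cases xs) auto
          have "barD U q F xs = F [x, x]" using x True by (simp add: barD_def)
          also have "F [x, x] = Phi U 0 F {} x x" using x by simp
          also have "\<dots> = dK U \<omega> {} x x" using \<omega>(2) True by simp
          also have "\<dots> = 0" by (simp add: dK_def)
          finally show ?thesis .
        qed
      qed
    qed
    define G where "G = (\<lambda>xs. 0 + (-1)^(Suc q) * sB U q F xs)"
    have GB: "G \<in> BarSpace U (q + 1)"
      unfolding G_def Suc_eq_plus1[symmetric] by (rule bs_lin[OF bs_zero sB_BarSpace[OF F]])
    have Fout: "F xs = 0" if "\<not> (length xs = q + 2 \<and> set xs \<subseteq> U)" for xs
    proof -
      obtain N :: nat and fs where FF: "F = (\<lambda>xs. \<Sum>m<N. elem U q (fs m) xs)"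
        using F unfolding BarSpace_iff by blast
      show ?thesis unfolding FF by (simp add: elem_out[OF that])
    qed
    have "F = barD U (q + 1) G"
    proof (rule ext)
      fix xs
      have bG: "barD U (q + 1) G = (\<lambda>xs. barD U (Suc q) (\<lambda>xs. 0) xs + (-1)^(Suc q) * barD U (Suc q) (sB U q F) xs)"
        unfolding G_def Suc_eq_plus1[symmetric] by (rule barD_lin)
      show "F xs = barD U (q + 1) G xs"
      proof (cases "length xs = q + 2 \<and> set xs \<subseteq> U")
        case True
        have "barD U (q + 1) G xs = (-1)^(Suc q) * ((-1)^(Suc q) * F xs)"
          unfolding bG barD_zero using barD_sB[OF True F] bz by simp
        also have "\<dots> = F xs" by (simp flip: mult.assoc power_add)
        finally show ?thesis by simp
      next
        case False
        have F0: "F xs = 0" by (rule Fout[OF False])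
        have "\<not> (length xs = Suc q + 1 \<and> set xs \<subseteq> U)" using False by auto
        then have "barD U (Suc q) H xs = 0" for H by (rule barD_out)
        then show ?thesis using F0 by (simp add: bG)
      qed
    qed
    with GB show "\<exists>G\<in>BarSpace U (q + 1). F = barD U (q + 1) G" by blast
  qed
  have I5: "\<forall>q \<omega>. \<omega> \<in> Kos U q \<longrightarrow> (q = 0 \<or> dK U \<omega> = (\<lambda>_ _ _. 0)) \<longrightarrow>
          (\<exists>F\<in>BarSpace U q. (q = 0 \<or> barD U q F = (\<lambda>_. 0)) \<and>
             (\<exists>\<eta>\<in>Kos U (q + 1). \<omega> = (\<lambda>I z \<zeta>. Phi U q F I z \<zeta> + dK U \<eta> I z \<zeta>)))"
  proof (intro allI impI)
    fix q \<omega> assume \<omega>: "\<omega> \<in> Kos U q" and h: "q = 0 \<or> dK U \<omega> = (\<lambda>_ _ _. 0)"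
    have dz: "dK U \<omega> = (\<lambda>_ _ _. 0)"
      using h dK_Kos0[of \<omega> U] \<omega> by auto
    have PK: "Pop U \<omega> \<in> Kos U (q + 1)" using Pop_Kos[OF U \<omega>] by simp
    have hom: "dK U (Pop U \<omega>) I z \<zeta> = \<omega> I z \<zeta> - (if q = 0 then \<omega> I \<zeta> \<zeta> else 0)"
      if "z \<in> U" "\<zeta> \<in> U" for I z \<zeta>
      using homotopy[OF U \<omega> that, of I] by (simp add: dz Pop_zero)
    show "\<exists>F\<in>BarSpace U q. (q = 0 \<or> barD U q F = (\<lambda>_. 0)) \<and>
             (\<exists>\<eta>\<in>Kos U (q + 1). \<omega> = (\<lambda>I z \<zeta>. Phi U q F I z \<zeta> + dK U \<eta> I z \<zeta>))"
    proof (cases "q = 0")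
      case False
      have "\<omega> = (\<lambda>I z \<zeta>. Phi U q (\<lambda>xs. 0) I z \<zeta> + dK U (Pop U \<omega>) I z \<zeta>)"
      proof (intro ext)
        fix I z \<zeta>
        show "\<omega> I z \<zeta> = Phi U q (\<lambda>xs. 0) I z \<zeta> + dK U (Pop U \<omega>) I z \<zeta>"
        proof (cases "z \<in> U \<and> \<zeta> \<in> U")
          case True then show ?thesis using hom[of z \<zeta> I] False by (simp add: Phi_zero)
        next
          case zz: False then show ?thesis using KosD(2)[OF \<omega>] by (auto simp: Phi_zero dK_def)
        qed
      qed
      note eq = this
      show ?thesis
      proof (rule bexI[of _ "\<lambda>xs. 0"], rule conjI)
        show "q = 0 \<or> barD U q (\<lambda>xs. 0) = (\<lambda>_. 0)" by (rule disjI2, rule barD_zero)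
        show "\<exists>\<eta>\<in>Kos U (q + 1). \<omega> = (\<lambda>I z \<zeta>. Phi U q (\<lambda>xs. 0) I z \<zeta> + dK U \<eta> I z \<zeta>)"
          using PK eq by blast
        show "(\<lambda>xs. 0) \<in> BarSpace U q" by (rule bs_zero)
      qed
    next
      case True
      define F where "F = elem U 0 (\<lambda>i. if i = 0 then (\<lambda>_. 1) else (\<lambda>x. \<omega> {} x x))"
      have FB: "F \<in> BarSpace U 0"
        unfolding F_def by (rule bs_elem) (use holo_diag[OF KosD(3)[OF \<omega>]] in auto)
      have "\<omega> = (\<lambda>I z \<zeta>. Phi U 0 F I z \<zeta> + dK U (Pop U \<omega>) I z \<zeta>)"
      proof (intro ext)
        fix I z \<zeta>
        show "\<omega> I z \<zeta> = Phi U 0 F I z \<zeta> + dK U (Pop U \<omega>) I z \<zeta>"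
        proof (cases "z \<in> U \<and> \<zeta> \<in> U")
          case zz: True
          show ?thesis
          proof (cases "I = {}")
            case True
            then show ?thesis using hom[of z \<zeta> I] zz \<open>q = 0\<close>
              by (simp add: F_def elem_def numeral_2_eq_2 lessThan_Suc)
          next
            case False
            then have "card I \<noteq> q" using \<open>q = 0\<close> by simp
            then show ?thesis using hom[of z \<zeta> I] zz KosD(1)[OF \<omega>] False by simp
          qed
        next
          case zz: False then show ?thesis using KosD(2)[OF \<omega>] by (auto simp: dK_def)
        qed
      qed
      then show ?thesis using FB PK True by auto
    qed
  qed
  show ?thesis using I1 I2 I3 I4 I5 by blast
qed


end
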